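(* Let $\|\cdot\|$ be a norm on $\mathbb R^d$ such that for every measurable $h$ with values in $\mathbb R^d$, $\big\|\int h\,d\mathbb P_{X_1}\big\|\le\int\|h\|\,d\mathbb P_{X_1}$ and $\big\|\int h\,d\mathbb P_{\varepsilon}\big\|\le\int\|h\|\,d\mathbb P_{\varepsilon}$. Let $n\ge 2$ and let $f:\mathcal X^n\to\mathbb R^d$ be measurable with $\|f(x_1,\dots,x_n)-f(x_1',\dots,x_n')\|\le\sum_{i=1}^n d_{\mathcal X}(x_i,x_i')$, with $f(X_1,\dots,X_n)$ integrable. Let $\mathcal F_0=\{\emptyset,\Omega\}$, $\mathcal F_k=\sigma(X_1,\dots,X_k)$, $g_k(X_1,\dots,X_k)=\mathbb E[f(X_1,\dots,X_n)\mid\mathcal F_k]$ for $0\le k\le n$, and $M_k=g_k(X_1,\dots,X_k)-g_{k-1}(X_1,\dots,X_{k-1})$ for $1\le k\le n$. Assume (C1). Then: 1. For every $k\in[1,n]$, $\|g_k(x_1,\dots,x_k)-g_k(x_1',\dots,x_k')\|\le d_{\mathcal X}(x_1,x_1')+\dots+d_{\mathcal X}(x_{k-1},x_{k-1}')+K_{k,n}\,d_{\mathcal X}(x_k,x_k')$. 2. With $H_{k,\varepsilon}(x,y)=\int d_{\mathcal X}(F_k(x,y),F_k(x,y'))\,\mathbb P_\varepsilon(dy')$ for $k\in[2,n]$: $\|M_1\|\le K_{1,n}G_{X_1}(X_1)$ and $\|M_k\|\le K_{k,n}H_{k,\varepsilon}(X_{k-1},\varepsilon_k)$ for $k\in[2,n]$.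 3. If moreover (C2) holds, then $H_{k,\varepsilon}(x,y)\le\tau_kG_\varepsilon(y)+\xi_k$ and hence $\|M_k\|\le K_{k,n}[\tau_kG_\varepsilon(\varepsilon_k)+\xi_k]$ for $k\in[2,n]$. 4. If condition (A) holds, then $\sup_{n\ge2}K_{1,n}<\infty$ and $\sup_{n\ge 2}\max_{2\le k\le n}K_{k,n}(\tau_k+\xi_k)<\infty$. 5. If condition (B) holds, then $\sup_{n\ge2}K_{1,n}<\infty$ and there is $C<\infty$ such that $K_{k,n}(\tau_k+\xi_k)\le Ck^{\alpha}$ for all $n\ge2$, $2\le k\le n$. 6. If condition (C) holds, then $\sup_{n\ge2}K_{1,n}<\infty$ and there is $C<\infty$ such that $K_{k,n}\tau_k\le Ck^{-\alpha}$ for all $n\ge 2$, $2\le k\le n$.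
   Context: Setting. $(\mathcal X,d_{\mathcal X})$ and $(\mathcal Y,\delta)$ are complete separable metric spaces. $\varepsilon$ is a $\mathcal Y$-valued random variable with law $\mathbb P_\varepsilon$, $(\varepsilon_i)_{i\ge1}$ are i.i.d. copies of $\varepsilon$, and $X_1$ is an $\mathcal X$-valued random variable with law $\mathbb P_{X_1}$, independent of $(\varepsilon_i)_{i\ge2}$. For $n\ge2$, $F_n:\mathcal X\times\mathcal Y\to\mathcal X$ is measurable and $X_n=F_n(X_{n-1},\varepsilon_n)$. Condition (C1): for every $n\ge2$ there is $\rho_n\in[0,1)$ with $\mathbb E[d_{\mathcal X}(F_n(x,\varepsilon_1),F_n(x',\varepsilon_1))]\le\rho_n d_{\mathcal X}(x,x')$ for all $x,x'\in\mathcal X$. Condition (C2): for every $n\ge2$ there are $\tau_n\ge0,\xi_n\ge0$ with $d_{\mathcal X}(F_n(x,y),F_n(x,y'))\le\tau_n\delta(y,y')+\xi_n$ for all $x\in\mathcal X$, $y,y'\in\mathcal Y$. $K_{k,n}=1+\rho_{k+1}+\rho_{k+1}\rho_{k+2}+\dots+\rho_{k+1}\rho_{k+2}\cdots\rho_n$ for $1\le k\le n-1$, and $K_{n,n}=1$. $G_{X_1}(x)=\int d_{\mathcal X}(x,x')\,\mathbb P_{X_1}(dx')$, $G_\varepsilon(y)=\int\delta(y,y')\,\mathbb P_\varepsilon(dy')$. Condition (A): there are constants $\alpha\in[0,1)$, $\rho\in(0,1)$, $\eta>0$ with $\rho_n\le1-\rho/n^\alpha$ and $\max\{\xi_n,\tau_n\}\le\eta/n^\alpha$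 for all $n\ge2$. Condition (B): there are constants $\alpha\in(0,1)$, $\rho\in(0,1)$, $\eta>0$ with $\rho_n\le1-\rho/n^\alpha$ and $\max\{\xi_n,\tau_n\}\le\eta$ for all $n\ge2$. Condition (C): there are constants $\alpha\in(0,1]$, $\rho\in(0,1)$, $\eta>0$ with $\rho_n\le\rho$ and $\max\{\xi_n,\tau_n\}\le\eta/n^\alpha$ for all $n\ge2$. *)

theory Defs
  imports "HOL-Probability.Probability"
begin

definition Kc :: "(nat \<Rightarrow> real) \<Rightarrow> nat \<Rightarrow> nat \<Rightarrow> real" where
  "Kc \<rho> k n = (\<Sum>j=k..n. \<Prod>i\<in>{k+1..j}. \<rho> i)"

definition is_norm :: "('v::real_vector \<Rightarrow> real) \<Rightarrow> bool" where
  "is_norm N \<longleftrightarrow> (\<forall>x. N x = 0 \<longleftrightarrow> x = 0) \<and> (\<forall>c x. N (c *\<^sub>R x) = \<bar>c\<bar> * N x)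
     \<and> (\<forall>x y. N (x + y) \<le> N x + N y)"

definition is_cond_exp_version ::
  "'a measure \<Rightarrow> 'a measure \<Rightarrow> ('a \<Rightarrow> 'v::{banach,second_countable_topology}) \<Rightarrow> ('a \<Rightarrow> 'v) \<Rightarrow> bool" where
  "is_cond_exp_version M Fk Y Z \<longleftrightarrow>
     Z \<in> borel_measurable Fk \<and> integrable M Z \<and>
     (\<forall>A\<in>sets Fk. (LINT \<omega>:A|M. Z \<omega>) = (LINT \<omega>:A|M. Y \<omega>))"

definition Xvec :: "(nat \<Rightarrow> 'a \<Rightarrow> 'x) \<Rightarrow> nat \<Rightarrow> 'a \<Rightarrow> (nat \<Rightarrow> 'x)" where
  "Xvec X k \<omega> = (\<lambda>i\<in>{1..k}. X i \<omega>)"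

text \<open>F_k = sigma(X_1,...,X_k); for k = 0 this is the trivial algebra {{}, Omega}.\<close>
definition Filt :: "'a measure \<Rightarrow> (nat \<Rightarrow> 'a \<Rightarrow> 'x::topological_space) \<Rightarrow> nat \<Rightarrow> 'a measure" where
  "Filt M X k = vimage_algebra (space M) (Xvec X k) (PiM {1..k} (\<lambda>_. borel))"

end

theory Submission
  imports Defs
begin

lemma Kc_empty: "n < k \<Longrightarrow> Kc \<rho> k n = 0"
  by (simp add: Kc_def)

lemma Kc_self: "Kc \<rho> n n = 1"
  by (simp add: Kc_def)

lemma Kc_rec: assumes "k < n" shows "Kc \<rho> k n = 1 + \<rho> (Suc k) * Kc \<rho> (Suc k) n"
proof -
  have "{k..n} = insert k {Suc k..n}" using assms by auto
  hence "Kc \<rho> k n = 1 + (\<Sum>j=Suc k..n. \<Prod>i\<in>{k+1..j}. \<rho> i)"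
    by (simp add: Kc_def)
  also have "(\<Sum>j=Suc k..n. \<Prod>i\<in>{k+1..j}. \<rho> i) = (\<Sum>j=Suc k..n. \<rho> (Suc k) * (\<Prod>i\<in>{Suc k+1..j}. \<rho> i))"
  proof (rule sum.cong[OF refl])
    fix j assume "j \<in> {Suc k..n}"
    hence "{k+1..j} = insert (Suc k) {Suc k+1..j}" by auto
    thus "(\<Prod>i\<in>{k+1..j}. \<rho> i) = \<rho> (Suc k) * (\<Prod>i\<in>{Suc k+1..j}. \<rho> i)" by simp
  qed
  finally show ?thesis by (simp add: Kc_def sum_distrib_left)
qed

lemma Kc_nonneg: assumes "\<And>i. i > k \<Longrightarrow> 0 \<le> \<rho> i" shows "0 \<le> Kc \<rho> k n"
  unfolding Kc_def using assms by (intro sum_nonneg prod_nonneg) auto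

lemma Kc_geom:
  assumes "\<And>i. i \<ge> 2 \<Longrightarrow> 0 \<le> \<rho> i \<and> \<rho> i \<le> r" "r < 1" "k \<ge> 1"
  shows "Kc \<rho> k n \<le> 1 / (1 - r)"
proof -
  have r0: "0 \<le> r" using assms(1)[of 2] by auto
  show ?thesis using assms(3)
proof (induction "n - k" arbitrary: k)
  case 0
  then show ?case
  proof (cases "k = n")
    case True then show ?thesis using assms r0 by (simp add: Kc_self)
  next
    case False
    then have "n < k" using 0 by auto
    then show ?thesis using assms by (simp add: Kc_empty)
  qed
next
  case (Suc d)
  hence kn: "k < n" by auto
  have IH: "Kc \<rho> (Suc k) n \<le> 1 / (1 - r)" using Suc by auto
  have r0: "0 \<le> \<rho> (Suc k)" "\<rho> (Suc k) \<le> r" using assms(1)[of "Suc k"] Suc by auto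
  have "Kc \<rho> k n = 1 + \<rho> (Suc k) * Kc \<rho> (Suc k) n" by (rule Kc_rec[OF kn])
  also have "\<dots> \<le> 1 + r * (1 / (1 - r))"
  proof -
    have K0: "0 \<le> Kc \<rho> (Suc k) n" using assms(1) Suc by (intro Kc_nonneg) auto
    have "\<rho> (Suc k) * Kc \<rho> (Suc k) n \<le> r * (1/(1-r))"
      using r0 K0 IH by (intro mult_mono) auto
    thus ?thesis by simp
  qed
  also have "\<dots> = 1 / (1 - r)" using assms(2) by (simp add: field_simps)
  finally show ?case .
qed
qed

lemma powr_step_bound:
  fixes x \<alpha> :: real
  assumes "x > 0" "0 \<le> \<alpha>" "\<alpha> \<le> 1"
  shows "(x + 1) powr \<alpha> - x powr \<alpha> \<le> x powr (\<alpha> - 1)"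
proof -
  have "x + 1 = x * (1 + 1/x)" using assms by (simp add: field_simps)
  hence "(x + 1) powr \<alpha> = (x * (1 + 1/x)) powr \<alpha>" by simp
  also have "\<dots> = x powr \<alpha> * (1 + 1/x) powr \<alpha>" using assms by (simp add: powr_mult)
  also have "(1 + 1/x) powr \<alpha> \<le> (1 + 1/x) powr 1"
    using assms by (intro powr_mono) auto
  hence "x powr \<alpha> * (1 + 1/x) powr \<alpha> \<le> x powr \<alpha> * (1 + 1/x)"
    using assms by (intro mult_left_mono) auto
  also have "x powr \<alpha> * (1 + 1/x) = x powr \<alpha> + x powr \<alpha> / x" by (simp add: field_simps)
  also have "x powr \<alpha> / x = x powr (\<alpha> - 1)" using assms by (simp add: powr_diff)
  finally show ?thesis by simp
qed

lemma Kc_poly: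
  assumes rho: "\<And>i. i \<ge> 2 \<Longrightarrow> 0 \<le> \<rho> i \<and> \<rho> i \<le> 1 - r / real i powr \<alpha>"
    and a: "0 \<le> \<alpha>" "\<alpha> < 1" and r: "0 < r" "r < 1"
  shows "\<exists>C. \<forall>k n. k \<ge> 1 \<longrightarrow> Kc \<rho> k n \<le> C * real k powr \<alpha>"
proof -
  define c where "c = 2 / r"
  define m :: nat where "m = nat \<lceil>(2/r) powr (1/(1-\<alpha>))\<rceil> + 1"
  have m1: "m \<ge> 1" by (simp add: m_def)
  have c1: "c \<ge> 1" "c * r = 2" using r by (auto simp: c_def field_simps)
  have mbig: "real m powr (1 - \<alpha>) \<ge> 2 / r"
  proof -
    have "(2/r) powr (1/(1-\<alpha>)) \<le> real m" unfolding m_def by linarith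
    hence "((2/r) powr (1/(1-\<alpha>))) powr (1-\<alpha>) \<le> real m powr (1 - \<alpha>)"
      using a by (intro powr_mono2) auto
    also have "((2/r) powr (1/(1-\<alpha>))) powr (1-\<alpha>) = 2/r"
      using a r by (simp add: powr_powr)
    finally show ?thesis .
  qed
  have delta: "(x + 1) powr \<alpha> - x powr \<alpha> \<le> r / 2" if "x \<ge> real m" for x :: real
  proof -
    have x0: "x > 0" using that m1 by auto
    have "(x + 1) powr \<alpha> - x powr \<alpha> \<le> x powr (\<alpha> - 1)"
      using x0 a by (intro powr_step_bound) auto
    also have "x powr (\<alpha> - 1) = 1 / x powr (1 - \<alpha>)"
      using x0 by (simp add: powr_minus_divide[symmetric] powr_minus)
    also have "x powr (1 - \<alpha>) \<ge> 2 / r"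
      using mbig that a m1 by (meson order_trans powr_mono2 diff_ge_0_iff_ge less_imp_le of_nat_0_le_iff)
    hence "1 / x powr (1 - \<alpha>) \<le> 1 / (2 / r)"
      using r \<open>x powr (1 - \<alpha>) \<ge> 2 / r\<close> x0 by (intro divide_left_mono) (auto intro!: mult_pos_pos divide_pos_pos)
    finally show ?thesis by simp
  qed
  define B where "B k = c * (real k + real m) powr \<alpha>" for k :: nat
  have B0: "0 \<le> B k" for k unfolding B_def using c1 by auto
  have main: "Kc \<rho> k n \<le> B k" if "k \<ge> 1" for k n
    using that
  proof (induction "n - k" arbitrary: k)
    case 0
    show ?case
    proof (cases "k = n")
      case True
      have "1 \<le> (real k + real m) powr \<alpha>" using a m1 by (intro ge_one_powr_ge_zero) auto
      hence "1 \<le> B k" unfolding B_def using c1 by (metis mult_mono' mult_1 zero_le_one)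
      thus ?thesis using True by (simp add: Kc_self)
    next
      case False
      then have "n < k" using 0 by auto
      then show ?thesis using B0 by (simp add: Kc_empty)
    qed
  next
    case (Suc d)
    hence kn: "k < n" by auto
    have IH: "Kc \<rho> (Suc k) n \<le> B (Suc k)" using Suc by auto
    have r0: "0 \<le> \<rho> (Suc k)" "\<rho> (Suc k) \<le> 1 - r / real (Suc k) powr \<alpha>" using rho[of "Suc k"] Suc by auto
    have K0: "0 \<le> Kc \<rho> (Suc k) n" using rho Suc by (intro Kc_nonneg) auto
    have pk: "real (Suc k) powr \<alpha> > 0" by simp
    have "Kc \<rho> k n = 1 + \<rho> (Suc k) * Kc \<rho> (Suc k) n" by (rule Kc_rec[OF kn])
    also have "\<dots> \<le> 1 + (1 - r / real (Suc k) powr \<alpha>) * B (Suc k)"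
      using r0 K0 IH B0[of "Suc k"] by (simp add: mult_mono')
    also have "\<dots> = 1 + B (Suc k) - r * c * ((real (Suc k) + real m) powr \<alpha> / real (Suc k) powr \<alpha>)"
      unfolding B_def by (simp add: field_simps)
    also have "(real (Suc k) + real m) powr \<alpha> / real (Suc k) powr \<alpha> \<ge> 1"
      using pk a by (simp add: powr_mono2)
    hence "r * c * ((real (Suc k) + real m) powr \<alpha> / real (Suc k) powr \<alpha>) \<ge> 2"
      using c1 r by (metis mult.commute mult_left_mono mult_1_right less_imp_le zero_le_numeral order_trans
            mult_nonneg_nonneg le_numeral_extra(1))
    hence "1 + B (Suc k) - r * c * ((real (Suc k) + real m) powr \<alpha> / real (Suc k) powr \<alpha>) \<le> B (Suc k) - 1"
      by simp
    also have "B (Suc k) - 1 \<le> B k"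
    proof -
      have "((real k + real m) + 1) powr \<alpha> - (real k + real m) powr \<alpha> \<le> r / 2"
        by (rule delta) simp
      hence "c * (((real k + real m) + 1) powr \<alpha> - (real k + real m) powr \<alpha>) \<le> c * (r/2)"
        using c1 by (intro mult_left_mono) auto
      moreover have "c * (r/2) = 1" using c1 by simp
      ultimately show ?thesis unfolding B_def by (simp add: add_ac right_diff_distrib)
    qed
    finally show ?case .
  qed
  show ?thesis
  proof (intro exI allI impI)
    fix k n :: nat assume k: "k \<ge> 1"
    have "Kc \<rho> k n \<le> B k" using main k .
    also have "B k \<le> c * (real (1 + m) * real k) powr \<alpha>"
    proof -
      have "real k + real m \<le> (1 + real m) * real k"
      proof -
        have "real m * 1 \<le> real m * real k" using k by (intro mult_left_mono) auto
        thus ?thesis by (simp add: algebra_simps)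
      qed
      thus ?thesis unfolding B_def using c1 k a by (intro mult_left_mono powr_mono2) auto
    qed
    also have "\<dots> = (c * real (1 + m) powr \<alpha>) * real k powr \<alpha>"
      by (simp add: powr_mult)
    finally show "Kc \<rho> k n \<le> (c * real (1 + m) powr \<alpha>) * real k powr \<alpha>" .
  qed
qed

context fixes N :: "'v::euclidean_space \<Rightarrow> real" assumes N: "is_norm N"
begin

lemma N_zero: "N 0 = 0" using N by (simp add: is_norm_def)
lemma N_add: "N (x + y) \<le> N x + N y" using N by (simp add: is_norm_def)
lemma N_scale: "N (c *\<^sub>R x) = \<bar>c\<bar> * N x" using N by (simp add: is_norm_def)
lemma N_minus: "N (- x) = N x" using N_scale[of "-1" x] by simp
lemma N_nonneg: "0 \<le> N x"
proof -
  have "N (x + - x) \<le> N x + N (- x)" by (rule N_add)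
  thus ?thesis by (simp add: N_zero N_minus)
qed
lemma N_diff_tri: "N (a - b) \<le> N (a - c) + N (c - b)"
  using N_add[of "a - c" "c - b"] by simp
lemma N_commute: "N (a - b) = N (b - a)"
  using N_minus[of "a - b"] by simp
lemma N_sum: "N (sum g A) \<le> sum (\<lambda>i. N (g i)) A"
proof (induction A rule: infinite_finite_induct)
  case (infinite A) then show ?case by (simp add: N_zero)
next
  case empty then show ?case by (simp add: N_zero)
next
  case (insert x F)
  then show ?case using N_add[of "g x" "sum g F"] by simp
qed

lemma N_upper: "\<exists>B\<ge>0. \<forall>x. N x \<le> B * norm x"
proof -
  define B where "B = (\<Sum>b\<in>Basis. N b)"
  have "N x \<le> B * norm x" for x
  proof -
    have "N x = N (\<Sum>b\<in>Basis. (x \<bullet> b) *\<^sub>R b)" by (simp add: euclidean_representation)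
    also have "\<dots> \<le> (\<Sum>b\<in>Basis. N ((x \<bullet> b) *\<^sub>R b))" by (rule N_sum)
    also have "\<dots> = (\<Sum>b\<in>Basis. \<bar>x \<bullet> b\<bar> * N b)" by (simp add: N_scale)
    also have "\<dots> \<le> (\<Sum>b\<in>Basis. norm x * N b)"
      by (intro sum_mono mult_right_mono Basis_le_norm N_nonneg)
    also have "\<dots> = B * norm x" by (simp add: B_def sum_distrib_left mult.commute)
    finally show ?thesis .
  qed
  moreover have "0 \<le> B" unfolding B_def by (intro sum_nonneg N_nonneg)
  ultimately show ?thesis by blast
qed

lemma N_cont: "continuous_on S N"
proof -
  obtain B where B0: "0 \<le> B" and B: "\<And>x. N x \<le> B * norm x" using N_upper by blast
  have "B-lipschitz_on S N"
  proof (rule lipschitz_onI)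
    fix x y
    have "N x \<le> N y + N (x - y)" using N_add[of y "x - y"] by simp
    moreover have "N y \<le> N x + N (y - x)" using N_add[of x "y - x"] by simp
    moreover have "N (y - x) = N (x - y)" by (rule N_commute)
    ultimately have "\<bar>N x - N y\<bar> \<le> N (x - y)" by linarith
    also have "\<dots> \<le> B * norm (x - y)" by (rule B)
    finally show "dist (N x) (N y) \<le> B * dist x y" by (simp add: dist_norm dist_real_def)
  qed (rule B0)
  thus ?thesis by (rule lipschitz_on_continuous_on)
qed

lemma N_equiv: "\<exists>c>0. \<forall>x. norm x \<le> c * N x"
proof -
  have c: "compact (sphere (0::'v) 1)" by (rule compact_sphere)
  have ne: "sphere (0::'v) 1 \<noteq> {}" by simp
  from continuous_attains_inf[OF c ne N_cont] obtain u where u: "u \<in> sphere 0 1"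
    and umin': "\<forall>y\<in>sphere 0 1. N u \<le> N y" by blast
  have umin: "N u \<le> N y" if "y \<in> sphere 0 1" for y using umin' that by blast
  have "u \<noteq> 0" using u by auto
  hence "N u \<noteq> 0" using N unfolding is_norm_def by blast
  hence m0: "N u > 0" using N_nonneg[of u] by linarith
  have "norm x \<le> (1 / N u) * N x" for x
  proof (cases "x = 0")
    case True then show ?thesis by (simp add: N_zero)
  next
    case False
    have "N u \<le> N ((1 / norm x) *\<^sub>R x)" using False by (intro umin) simp
    also have "\<dots> = N x / norm x" by (simp add: N_scale)
    finally have "N u * norm x \<le> N x" using False by (simp add: field_simps)
    thus ?thesis using m0 by (simp add: field_simps)
  qed
  thus ?thesis using m0 by (intro exI[of _ "1 / N u"]) auto
qed

end

locale L = prob_space M for M :: "'a measure" +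
  fixes X :: "nat \<Rightarrow> 'a \<Rightarrow> 'x::polish_space"
    and \<epsilon> :: "nat \<Rightarrow> 'a \<Rightarrow> 'y::polish_space"
    and F :: "nat \<Rightarrow> 'x \<Rightarrow> 'y \<Rightarrow> 'x"
    and N :: "real^'d \<Rightarrow> real"
    and f :: "(nat \<Rightarrow> 'x) \<Rightarrow> real^'d"
    and n :: nat
    and \<rho> :: "nat \<Rightarrow> real"
  assumes eps_meas: "\<And>i. \<epsilon> i \<in> borel_measurable M"
    and eps_indep: "indep_vars (\<lambda>_. borel) \<epsilon> {1..}"
    and eps_ident: "\<And>i. i \<ge> 1 \<Longrightarrow> distr M borel (\<epsilon> i) = distr M borel (\<epsilon> 1)"
    and X1_meas: "X 1 \<in> borel_measurable M"
    and X1_indep: "indep_set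
        (sets (vimage_algebra (space M) (X 1) borel))
        (sets (vimage_algebra (space M) (\<lambda>\<omega>. \<lambda>i\<in>{2..}. \<epsilon> i \<omega>) (PiM {2..} (\<lambda>_. borel))))"
    and F_meas: "\<And>m. m \<ge> 2 \<Longrightarrow> (\<lambda>(x, y). F m x y) \<in> borel_measurable (borel \<Otimes>\<^sub>M borel)"
    and X_rec: "\<And>m \<omega>. m \<ge> 2 \<Longrightarrow> X m \<omega> = F m (X (m - 1) \<omega>) (\<epsilon> m \<omega>)"
    and N_norm: "is_norm N"
    and N_jensen_X1: "\<And>h. h \<in> borel_measurable (distr M borel (X 1)) \<Longrightarrow>
        ennreal (N (\<integral>x. h x \<partial>distr M borel (X 1))) \<le> (\<integral>\<^sup>+x. ennreal (N (h x)) \<partial>distr M borel (X 1))"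
    and N_jensen_eps: "\<And>h. h \<in> borel_measurable (distr M borel (\<epsilon> 1)) \<Longrightarrow>
        ennreal (N (\<integral>y. h y \<partial>distr M borel (\<epsilon> 1))) \<le> (\<integral>\<^sup>+y. ennreal (N (h y)) \<partial>distr M borel (\<epsilon> 1))"
    and n2: "n \<ge> 2"
    and f_meas: "f \<in> borel_measurable (PiM {1..n} (\<lambda>_. borel))"
    and f_lip: "\<And>x x'. x \<in> space (PiM {1..n} (\<lambda>_. (borel :: 'x measure))) \<Longrightarrow>
        x' \<in> space (PiM {1..n} (\<lambda>_. (borel :: 'x measure))) \<Longrightarrow>
        N (f x - f x') \<le> (\<Sum>i=1..n. dist (x i) (x' i))"
    and f_int: "integrable M (\<lambda>\<omega>. f (Xvec X n \<omega>))"
    and C1: "\<And>m. m \<ge> 2 \<Longrightarrow> 0 \<le> \<rho> m \<and> \<rho> m < 1 \<and>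
        (\<forall>x x'. (\<integral>\<^sup>+\<omega>. ennreal (dist (F m x (\<epsilon> 1 \<omega>)) (F m x' (\<epsilon> 1 \<omega>))) \<partial>M)
                  \<le> ennreal (\<rho> m * dist x x'))"
begin

lemma X_meas_gen:
  assumes sp: "space Q = space M" and Q1: "X 1 \<in> borel_measurable Q"
    and Qe: "\<And>i. 2 \<le> i \<Longrightarrow> i \<le> k \<Longrightarrow> \<epsilon> i \<in> borel_measurable Q"
  shows "1 \<le> j \<Longrightarrow> j \<le> k \<Longrightarrow> X j \<in> borel_measurable Q"
proof (induction j)
  case 0 then show ?case by simp
next
  case (Suc j)
  show ?case
  proof (cases "j = 0")
    case True then show ?thesis using Q1 by simp
  next
    case False
    have Xj: "X j \<in> borel_measurable Q" using Suc False by auto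
    have e: "\<epsilon> (Suc j) \<in> borel_measurable Q" using Suc False by (intro Qe) auto
    have "(\<lambda>\<omega>. (\<lambda>(x, y). F (Suc j) x y) (X j \<omega>, \<epsilon> (Suc j) \<omega>)) \<in> borel_measurable Q"
      using False by (intro measurable_compose[OF measurable_Pair[OF Xj e] F_meas]) auto
    moreover have "\<And>\<omega>. (\<lambda>(x, y). F (Suc j) x y) (X j \<omega>, \<epsilon> (Suc j) \<omega>) = X (Suc j) \<omega>"
      using X_rec[of "Suc j"] False by simp
    ultimately show ?thesis by simp
  qed
qed

lemma X_meas: "1 \<le> j \<Longrightarrow> X j \<in> borel_measurable M"
  using X_meas_gen[of M j j] X1_meas eps_meas by auto

lemma Xvec_meas_gen:
  assumes sp: "space Q = space M" and Q1: "X 1 \<in> borel_measurable Q"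
    and Qe: "\<And>i. 2 \<le> i \<Longrightarrow> i \<le> k \<Longrightarrow> \<epsilon> i \<in> borel_measurable Q"
  shows "Xvec X k \<in> Q \<rightarrow>\<^sub>M PiM {1..k} (\<lambda>_. borel)"
  unfolding Xvec_def[abs_def]
  by (rule measurable_restrict) (use X_meas_gen[OF sp Q1 Qe] in auto)

lemma Xvec_meas: "Xvec X k \<in> M \<rightarrow>\<^sub>M PiM {1..k} (\<lambda>_. borel)"
  using Xvec_meas_gen[of M k] X1_meas eps_meas by auto


definition "Evec = (\<lambda>\<omega>. \<lambda>i\<in>{2..}. \<epsilon> i \<omega>)"
definition "Esig i = (if i = 1 then sets (vimage_algebra (space M) (X 1) borel)
                      else sets (vimage_algebra (space M) (\<epsilon> i) borel))"

lemma Esig_eps: "i \<noteq> 1 \<Longrightarrow> Esig i = {\<epsilon> i -` A \<inter> space M |A. A \<in> sets borel}"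
  unfolding Esig_def by (simp add: sets_vimage_algebra2)

lemma Esig_X1: "Esig 1 = {X 1 -` A \<inter> space M |A. A \<in> sets borel}"
  unfolding Esig_def by (simp add: sets_vimage_algebra2)

lemma Esig_X1': "Esig (Suc 0) = {X (Suc 0) -` A \<inter> space M |A. A \<in> sets borel}"
  using Esig_X1 by simp

lemma Esig_events: "Esig i \<subseteq> events"
proof (cases "i = 1")
  case True then show ?thesis using X1_meas by (auto simp: Esig_X1')
next
  case False then show ?thesis using eps_meas by (auto simp: Esig_eps)
qed

lemma eps_in_V:
  assumes "j \<ge> 2" "A \<in> sets borel"
  shows "\<epsilon> j -` A \<inter> space M \<in> sets (vimage_algebra (space M) Evec (PiM {2..} (\<lambda>_. borel)))"
proof -
  let ?V = "vimage_algebra (space M) Evec (PiM {2..} (\<lambda>_. (borel :: 'y measure)))"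
  have sp: "Evec \<in> space M \<rightarrow> space (PiM {2..} (\<lambda>_. (borel :: 'y measure)))"
    unfolding Evec_def space_PiM by auto
  have m1: "Evec \<in> ?V \<rightarrow>\<^sub>M PiM {2..} (\<lambda>_. borel)"
    by (rule measurable_vimage_algebra1[OF sp])
  have m2: "(\<lambda>x. x j) \<in> PiM {2..} (\<lambda>_. (borel :: 'y measure)) \<rightarrow>\<^sub>M borel"
    using assms(1) by (intro measurable_component_singleton) simp
  have "(\<lambda>\<omega>. Evec \<omega> j) \<in> ?V \<rightarrow>\<^sub>M borel"
    using measurable_comp[OF m1 m2] by (simp add: comp_def)
  moreover have "(\<lambda>\<omega>. Evec \<omega> j) = \<epsilon> j" using assms(1) by (simp add: Evec_def fun_eq_iff)
  ultimately have m3: "\<epsilon> j \<in> ?V \<rightarrow>\<^sub>M borel" by simp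
  have "\<epsilon> j -` A \<inter> space ?V \<in> sets ?V" by (rule measurable_sets[OF m3 assms(2)])
  moreover have "space ?V = space M" by (rule space_vimage_algebra)
  ultimately show ?thesis by simp
qed

lemma indep_Esig: "indep_sets Esig {1..}"
proof (rule indep_setsI)
  fix i show "Esig i \<subseteq> events" by (rule Esig_events)
next
  fix A J assume J: "J \<noteq> {}" "J \<subseteq> {1..}" "finite J" and A: "\<forall>j\<in>J. A j \<in> Esig j"
  have epsI: "indep_sets (\<lambda>i. {\<epsilon> i -` A \<inter> space M |A. A \<in> sets borel}) {1..}"
    using eps_indep unfolding indep_vars_def2 by simp
  show "prob (\<Inter>j\<in>J. A j) = (\<Prod>j\<in>J. prob (A j))"
  proof (cases "1 \<in> J")
    case False
    have "\<forall>j\<in>J. A j \<in> {\<epsilon> j -` A \<inter> space M |A. A \<in> sets borel}"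
    proof
      fix j assume "j \<in> J"
      hence "j \<noteq> 1" using False by auto
      hence eq: "Esig j = {\<epsilon> j -` A \<inter> space M |A. A \<in> sets borel}" by (rule Esig_eps)
      have "A j \<in> Esig j" using A \<open>j \<in> J\<close> by blast
      thus "A j \<in> {\<epsilon> j -` A \<inter> space M |A. A \<in> sets borel}" unfolding eq .
    qed
    then show ?thesis using J by (intro indep_setsD[OF epsI]) auto
  next
    case True
    define J' where "J' = J - {1}"
    have JJ: "J = insert 1 J'" "1 \<notin> J'" "finite J'" using True J by (auto simp: J'_def)
    show ?thesis
    proof (cases "J' = {}")
      case True then show ?thesis using JJ by simp
    next
      case ne: False
      have AJ': "\<forall>j\<in>J'. A j \<in> {\<epsilon> j -` A \<inter> space M |A. A \<in> sets borel}"
      proof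
        fix j assume "j \<in> J'"
        hence "j \<noteq> 1" "j \<in> J" using JJ by auto
        hence eq: "Esig j = {\<epsilon> j -` A \<inter> space M |A. A \<in> sets borel}" using Esig_eps by simp
        have "A j \<in> Esig j" using A \<open>j \<in> J\<close> by blast
        thus "A j \<in> {\<epsilon> j -` A \<inter> space M |A. A \<in> sets borel}" unfolding eq .
      qed
      have W: "(\<Inter>j\<in>J'. A j) \<in> sets (vimage_algebra (space M) Evec (PiM {2..} (\<lambda>_. borel)))"
      proof (rule sets.finite_INT)
        fix j assume "j \<in> J'"
        with AJ' obtain B where B: "B \<in> sets borel" "A j = \<epsilon> j -` B \<inter> space M" by blast
        have "j \<ge> 2" using \<open>j \<in> J'\<close> J unfolding J'_def by auto
        from eps_in_V[OF this B(1)] show "A j \<in> sets (vimage_algebra (space M) Evec (PiM {2..} (\<lambda>_. borel)))"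
          unfolding B(2) .
      next
        show "finite J'" by (rule JJ(3))
      next
        show "J' \<noteq> {}" by (rule ne)
      qed
      have "A 1 \<in> Esig 1" using A True by blast
      hence A1: "A 1 \<in> sets (vimage_algebra (space M) (X 1) borel)"
        unfolding Esig_def by simp
      have "prob (\<Inter>j\<in>J. A j) = prob (A 1 \<inter> (\<Inter>j\<in>J'. A j))" using JJ by simp
      also have "\<dots> = prob (A 1) * prob (\<Inter>j\<in>J'. A j)"
        using X1_indep A1 W unfolding Evec_def by (rule indep_setD)
      also have "prob (\<Inter>j\<in>J'. A j) = (\<Prod>j\<in>J'. prob (A j))"
        using AJ' JJ ne J by (intro indep_setsD[OF epsI]) auto
      also have "prob (A 1) * (\<Prod>j\<in>J'. prob (A j)) = (\<Prod>j\<in>J. prob (A j))"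
        using JJ by simp
      finally show ?thesis .
    qed
  qed
qed

lemma indep_Xvec_eps:
  assumes k: "k \<ge> 1"
  shows "indep_set
      (sigma_sets (space M) {Xvec X k -` A \<inter> space M |A. A \<in> sets (PiM {1..k} (\<lambda>_. borel))})
      (sigma_sets (space M) {\<epsilon> (Suc k) -` A \<inter> space M |A. A \<in> sets (borel::'y measure)})"
proof -
  define I where "I = (\<lambda>b. if b then {1..k} else {Suc k})"
  have ind: "indep_sets (\<lambda>j. sigma_sets (space M) (\<Union>i\<in>I j. Esig i)) UNIV"
  proof (rule indep_sets_collect_sigma)
    show "indep_sets Esig (\<Union>j\<in>UNIV. I j)"
      by (rule indep_sets_mono_index[OF _ indep_Esig]) (auto simp: I_def)
    show "Int_stable (Esig i)" for i unfolding Esig_def by (simp add: sets.Int_stable)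
    show "disjoint_family_on I UNIV" by (auto simp: disjoint_family_on_def I_def)
  qed
  define SM where "SM = sigma (space M) (\<Union>i\<in>{1..k}. Esig i)"
  have Esub: "(\<Union>i\<in>{1..k}. Esig i) \<subseteq> Pow (space M)"
  proof (rule UN_least)
    fix i show "Esig i \<subseteq> Pow (space M)" using Esig_events[of i] sets.space_closed by (rule order_trans)
  qed
  have spSM: "space SM = space M" and setsSM: "sets SM = sigma_sets (space M) (\<Union>i\<in>{1..k}. Esig i)"
    unfolding SM_def using sets_measure_of[OF Esub] space_measure_of[OF Esub] by simp_all
  have X1SM: "X 1 \<in> borel_measurable SM"
  proof (rule measurableI)
    fix A :: "'x set" assume "A \<in> sets borel"
    hence "X 1 -` A \<inter> space M \<in> Esig 1" unfolding Esig_X1 by blast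
    moreover have "1 \<in> {1..k}" using k by simp
    ultimately have "X 1 -` A \<inter> space M \<in> (\<Union>i\<in>{1..k}. Esig i)" by (intro UN_I)
    thus "X 1 -` A \<inter> space SM \<in> sets SM" unfolding spSM setsSM by (rule sigma_sets.Basic)
  qed simp
  have eSM: "\<epsilon> i \<in> borel_measurable SM" if "2 \<le> i" "i \<le> k" for i
  proof (rule measurableI)
    fix A :: "'y set" assume "A \<in> sets borel"
    moreover have eq: "Esig i = {\<epsilon> i -` A \<inter> space M |A. A \<in> sets borel}" using that by (intro Esig_eps) simp
    ultimately have "\<epsilon> i -` A \<inter> space M \<in> Esig i" unfolding eq by blast
    moreover have "i \<in> {1..k}" using that by simp
    ultimately have "\<epsilon> i -` A \<inter> space M \<in> (\<Union>i\<in>{1..k}. Esig i)" by (intro UN_I)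
    thus "\<epsilon> i -` A \<inter> space SM \<in> sets SM" unfolding spSM setsSM by (rule sigma_sets.Basic)
  qed simp
  have XvSM: "Xvec X k \<in> SM \<rightarrow>\<^sub>M PiM {1..k} (\<lambda>_. borel)"
    by (rule Xvec_meas_gen[OF spSM X1SM eSM])
  have S1: "sigma_sets (space M) {Xvec X k -` A \<inter> space M |A. A \<in> sets (PiM {1..k} (\<lambda>_. borel))}
      \<subseteq> sigma_sets (space M) (\<Union>i\<in>I True. Esig i)"
  proof (rule sigma_sets_mono)
    show "{Xvec X k -` A \<inter> space M |A. A \<in> sets (PiM {1..k} (\<lambda>_. borel))}
      \<subseteq> sigma_sets (space M) (\<Union>i\<in>I True. Esig i)"
    proof (intro subsetI)
      fix x assume "x \<in> {Xvec X k -` A \<inter> space M |A. A \<in> sets (PiM {1..k} (\<lambda>_. borel))}"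
      then obtain A where A: "A \<in> sets (PiM {1..k} (\<lambda>_. borel))" "x = Xvec X k -` A \<inter> space M" by blast
      have "Xvec X k -` A \<inter> space SM \<in> sets SM" by (rule measurable_sets[OF XvSM A(1)])
      thus "x \<in> sigma_sets (space M) (\<Union>i\<in>I True. Esig i)" unfolding spSM setsSM A(2) I_def by simp
    qed
  qed
  have S2: "sigma_sets (space M) {\<epsilon> (Suc k) -` A \<inter> space M |A. A \<in> sets borel}
      \<subseteq> sigma_sets (space M) (\<Union>i\<in>I False. Esig i)"
  proof (rule sigma_sets_mono)
    have eq: "Esig (Suc k) = {\<epsilon> (Suc k) -` A \<inter> space M |A. A \<in> sets borel}" using k by (intro Esig_eps) simp
    have sub: "Esig (Suc k) \<subseteq> sigma_sets (space M) (\<Union>i\<in>I False. Esig i)"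
    proof
      fix x assume "x \<in> Esig (Suc k)"
      thus "x \<in> sigma_sets (space M) (\<Union>i\<in>I False. Esig i)" unfolding I_def by (intro sigma_sets.Basic) simp
    qed
    show "{\<epsilon> (Suc k) -` A \<inter> space M |A. A \<in> sets borel} \<subseteq> sigma_sets (space M) (\<Union>i\<in>I False. Esig i)"
      using sub unfolding eq .
  qed
  show ?thesis
    unfolding indep_set_def
  proof (rule indep_sets_mono_sets[OF ind])
    fix i :: bool
    show "case_bool (sigma_sets (space M) {Xvec X k -` A \<inter> space M |A. A \<in> sets (PiM {1..k} (\<lambda>_. borel))})
      (sigma_sets (space M) {\<epsilon> (Suc k) -` A \<inter> space M |A. A \<in> sets (borel::'y measure)}) i
      \<subseteq> sigma_sets (space M) (\<Union>i\<in>I i. Esig i)"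
      using S1 S2 by (cases i) simp_all
  qed
qed

abbreviation "Pe \<equiv> distr M borel (\<epsilon> 1)"
abbreviation "PX \<equiv> distr M borel (X 1)"
abbreviation "Pk k \<equiv> distr M (PiM {1..k} (\<lambda>_. borel)) (Xvec X k)"

lemma joint_distr:
  assumes "k \<ge> 1"
  shows "distr M (PiM {1..k} (\<lambda>_. borel) \<Otimes>\<^sub>M borel) (\<lambda>\<omega>. (Xvec X k \<omega>, \<epsilon> (Suc k) \<omega>)) = Pk k \<Otimes>\<^sub>M Pe"
proof -
  have "Pk k \<Otimes>\<^sub>M distr M borel (\<epsilon> (Suc k)) =
     distr M (PiM {1..k} (\<lambda>_. borel) \<Otimes>\<^sub>M borel) (\<lambda>\<omega>. (Xvec X k \<omega>, \<epsilon> (Suc k) \<omega>))"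
  proof (rule pair_measure_eqI)
    show "sigma_finite_measure (Pk k)" "sigma_finite_measure (distr M borel (\<epsilon> (Suc k)))"
      using Xvec_meas eps_meas by (auto intro!: prob_space_imp_sigma_finite prob_space_distr)
    show "sets (Pk k \<Otimes>\<^sub>M distr M borel (\<epsilon> (Suc k))) =
      sets (distr M (PiM {1..k} (\<lambda>_. borel) \<Otimes>\<^sub>M borel) (\<lambda>\<omega>. (Xvec X k \<omega>, \<epsilon> (Suc k) \<omega>)))"
      unfolding sets_distr by (rule sets_pair_measure_cong) simp_all
  next
    fix A B assume A: "A \<in> sets (Pk k)" and B: "B \<in> sets (distr M borel (\<epsilon> (Suc k)))"
    have A': "A \<in> sets (PiM {1..k} (\<lambda>_. (borel::'x measure)))" using A by simp
    have B': "B \<in> sets (borel::'y measure)" using B by simp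
    have ev: "Xvec X k -` A \<inter> space M \<in> events" "\<epsilon> (Suc k) -` B \<inter> space M \<in> events"
      using measurable_sets[OF Xvec_meas A'] measurable_sets[OF eps_meas B'] by auto
    have "prob ((Xvec X k -` A \<inter> space M) \<inter> (\<epsilon> (Suc k) -` B \<inter> space M)) =
        prob (Xvec X k -` A \<inter> space M) * prob (\<epsilon> (Suc k) -` B \<inter> space M)"
      by (rule indep_setD[OF indep_Xvec_eps[OF assms]]) (use A' B' in \<open>auto intro: sigma_sets.Basic\<close>)
    moreover have "(\<lambda>\<omega>. (Xvec X k \<omega>, \<epsilon> (Suc k) \<omega>)) \<in> M \<rightarrow>\<^sub>M PiM {1..k} (\<lambda>_. borel) \<Otimes>\<^sub>M borel"
      using Xvec_meas eps_meas by (intro measurable_Pair Xvec_meas eps_meas)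
    ultimately show "emeasure (Pk k) A * emeasure (distr M borel (\<epsilon> (Suc k))) B =
      emeasure (distr M (PiM {1..k} (\<lambda>_. borel) \<Otimes>\<^sub>M borel) (\<lambda>\<omega>. (Xvec X k \<omega>, \<epsilon> (Suc k) \<omega>))) (A \<times> B)"
    proof -
      assume P: "prob ((Xvec X k -` A \<inter> space M) \<inter> (\<epsilon> (Suc k) -` B \<inter> space M)) =
        prob (Xvec X k -` A \<inter> space M) * prob (\<epsilon> (Suc k) -` B \<inter> space M)"
        and pm: "(\<lambda>\<omega>. (Xvec X k \<omega>, \<epsilon> (Suc k) \<omega>)) \<in> M \<rightarrow>\<^sub>M PiM {1..k} (\<lambda>_. borel) \<Otimes>\<^sub>M borel"
      have AB: "A \<times> B \<in> sets (PiM {1..k} (\<lambda>_. borel) \<Otimes>\<^sub>M borel)" using A' B' by (rule pair_measureI)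
      have e1: "emeasure (distr M (PiM {1..k} (\<lambda>_. borel) \<Otimes>\<^sub>M borel) (\<lambda>\<omega>. (Xvec X k \<omega>, \<epsilon> (Suc k) \<omega>))) (A \<times> B)
          = emeasure M ((\<lambda>\<omega>. (Xvec X k \<omega>, \<epsilon> (Suc k) \<omega>)) -` (A \<times> B) \<inter> space M)"
        by (rule emeasure_distr[OF pm AB])
      have e2: "(\<lambda>\<omega>. (Xvec X k \<omega>, \<epsilon> (Suc k) \<omega>)) -` (A \<times> B) \<inter> space M
          = (Xvec X k -` A \<inter> space M) \<inter> (\<epsilon> (Suc k) -` B \<inter> space M)" by auto
      have e3: "emeasure (Pk k) A = emeasure M (Xvec X k -` A \<inter> space M)"
        by (rule emeasure_distr[OF Xvec_meas A'])
      have e4: "emeasure (distr M borel (\<epsilon> (Suc k))) B = emeasure M (\<epsilon> (Suc k) -` B \<inter> space M)"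
        by (rule emeasure_distr[OF eps_meas B'])
      show ?thesis unfolding e1 e2 e3 e4 emeasure_eq_measure P
        by (simp add: ennreal_mult')
    qed
  qed
  moreover have "distr M borel (\<epsilon> (Suc k)) = Pe" using eps_ident[of "Suc k"] by simp
  ultimately show ?thesis by simp
qed

end

context L begin

definition upd :: "nat \<Rightarrow> (nat \<Rightarrow> 'x) \<Rightarrow> 'y \<Rightarrow> (nat \<Rightarrow> 'x)" where
  "upd k x y = x(Suc k := F (Suc k) (x k) y)"

primrec G :: "nat \<Rightarrow> (nat \<Rightarrow> 'x) \<Rightarrow> real^'d" where
  "G 0 = f"
| "G (Suc j) = (\<lambda>x. \<integral>y. G j (upd (n - Suc j) x y) \<partial>Pe)"

definition gg :: "nat \<Rightarrow> (nat \<Rightarrow> 'x) \<Rightarrow> real^'d" where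
  "gg k = (if k = 0 then (\<lambda>_. \<integral>z. G (n - 1) ((\<lambda>_. undefined)(1 := z)) \<partial>PX) else G (n - k))"

lemma gg_n: "gg n = f" using n2 by (simp add: gg_def)

lemma gg_step: assumes "1 \<le> k" "k < n" shows "gg k = (\<lambda>x. \<integral>y. gg (Suc k) (upd k x y) \<partial>Pe)"
proof -
  have e: "n - k = Suc (n - Suc k)" using assms by simp
  have "n - Suc (n - Suc k) = k" using assms by simp
  thus ?thesis using assms unfolding gg_def e by simp
qed

lemma gg_0: "gg 0 = (\<lambda>_. \<integral>z. gg 1 ((\<lambda>_. undefined)(1 := z)) \<partial>PX)"
  using n2 by (simp add: gg_def)

lemma upd_space:
  assumes "x \<in> space (PiM {1..k} (\<lambda>_. (borel :: 'x measure)))"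
  shows "upd k x y \<in> space (PiM {1..Suc k} (\<lambda>_. (borel :: 'x measure)))"
  using assms unfolding upd_def space_PiM PiE_iff extensional_def by auto

lemma upd_meas:
  assumes k: "k \<ge> 1"
  shows "(\<lambda>p. upd k (fst p) (snd p)) \<in> (PiM {1..k} (\<lambda>_. borel) \<Otimes>\<^sub>M borel) \<rightarrow>\<^sub>M PiM {1..Suc k} (\<lambda>_. borel)"
proof -
  have Fm: "(\<lambda>p. F (Suc k) (fst p k) (snd p)) \<in> (PiM {1..k} (\<lambda>_. (borel::'x measure)) \<Otimes>\<^sub>M (borel::'y measure)) \<rightarrow>\<^sub>M borel"
  proof -
    have "(\<lambda>p. (fst p k, snd p)) \<in> (PiM {1..k} (\<lambda>_. (borel::'x measure)) \<Otimes>\<^sub>M (borel::'y measure)) \<rightarrow>\<^sub>M borel \<Otimes>\<^sub>M borel"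
      using k by (intro measurable_Pair measurable_compose[OF measurable_fst measurable_component_singleton] measurable_snd) auto
    from measurable_compose[OF this F_meas[of "Suc k"]] show ?thesis using k by simp
  qed
  have meas: "(\<lambda>p. \<lambda>i\<in>{1..Suc k}. if i = Suc k then F (Suc k) (fst p k) (snd p) else fst p i)
      \<in> (PiM {1..k} (\<lambda>_. borel) \<Otimes>\<^sub>M borel) \<rightarrow>\<^sub>M PiM {1..Suc k} (\<lambda>_. borel)"
  proof (rule measurable_restrict)
    fix i assume i: "i \<in> {1..Suc k}"
    show "(\<lambda>p. if i = Suc k then F (Suc k) (fst p k) (snd p) else fst p i)
        \<in> (PiM {1..k} (\<lambda>_. borel) \<Otimes>\<^sub>M borel) \<rightarrow>\<^sub>M borel"
    proof (cases "i = Suc k")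
      case True then show ?thesis using Fm by simp
    next
      case False
      then have "i \<in> {1..k}" using i by auto
      then have "(\<lambda>p. fst p i) \<in> (PiM {1..k} (\<lambda>_. (borel::'x measure)) \<Otimes>\<^sub>M (borel::'y measure)) \<rightarrow>\<^sub>M borel"
        by (intro measurable_compose[OF measurable_fst measurable_component_singleton])
      then show ?thesis using False by simp
    qed
  qed
  have eq: "\<And>p. p \<in> space (PiM {1..k} (\<lambda>_. (borel::'x measure)) \<Otimes>\<^sub>M (borel::'y measure)) \<Longrightarrow>
      upd k (fst p) (snd p) = (\<lambda>i\<in>{1..Suc k}. if i = Suc k then F (Suc k) (fst p k) (snd p) else fst p i)"
    unfolding space_pair_measure space_PiM upd_def by (auto simp: fun_eq_iff PiE_iff extensional_def)
  show ?thesis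
    apply (subst measurable_cong[where g="\<lambda>p. \<lambda>i\<in>{1..Suc k}. if i = Suc k then F (Suc k) (fst p k) (snd p) else fst p i"])
     apply (erule eq)
    apply (rule meas)
    done
qed

lemma Xvec_space: "Xvec X k \<omega> \<in> space (PiM {1..k} (\<lambda>_. (borel :: 'x measure)))"
  unfolding Xvec_def space_PiM by auto

lemma Xvec_upd: assumes "k \<ge> 1" shows "Xvec X (Suc k) \<omega> = upd k (Xvec X k \<omega>) (\<epsilon> (Suc k) \<omega>)"
proof
  fix i show "Xvec X (Suc k) \<omega> i = upd k (Xvec X k \<omega>) (\<epsilon> (Suc k) \<omega>) i"
    using assms X_rec[of "Suc k" \<omega>] by (auto simp: Xvec_def upd_def)
qed

lemma C1': assumes "m \<ge> 2"
  shows "(\<integral>\<^sup>+y. ennreal (dist (F m x y) (F m x' y)) \<partial>Pe) \<le> ennreal (\<rho> m * dist x x')"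
    and "(\<lambda>y. dist (F m x y) (F m x' y)) \<in> borel_measurable borel"
    and "integrable Pe (\<lambda>y. dist (F m x y) (F m x' y))"
proof -
  have Fx: "F m z \<in> borel_measurable borel" for z
  proof -
    have "(\<lambda>y. (z, y)) \<in> (borel::'y measure) \<rightarrow>\<^sub>M (borel::'x measure) \<Otimes>\<^sub>M borel" by simp
    from measurable_compose[OF this F_meas[OF assms]] show ?thesis by simp
  qed
  show dm: "(\<lambda>y. dist (F m x y) (F m x' y)) \<in> borel_measurable borel"
    using Fx[of x] Fx[of x'] by (intro borel_measurable_dist)
  have "(\<integral>\<^sup>+y. ennreal (dist (F m x y) (F m x' y)) \<partial>Pe) = (\<integral>\<^sup>+\<omega>. ennreal (dist (F m x (\<epsilon> 1 \<omega>)) (F m x' (\<epsilon> 1 \<omega>))) \<partial>M)"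
    using dm eps_meas by (intro nn_integral_distr) auto
  also have "\<dots> \<le> ennreal (\<rho> m * dist x x')" using C1[OF assms] by blast
  finally show *: "(\<integral>\<^sup>+y. ennreal (dist (F m x y) (F m x' y)) \<partial>Pe) \<le> ennreal (\<rho> m * dist x x')" .
  show "integrable Pe (\<lambda>y. dist (F m x y) (F m x' y))"
    using dm * by (intro integrableI_bounded) (auto simp: top.not_eq_extremum intro: le_less_trans)
qed

lemma rho_nn: "m \<ge> 2 \<Longrightarrow> 0 \<le> \<rho> m" using C1 by blast

lemma Kc_nn: "k \<ge> 1 \<Longrightarrow> 0 \<le> Kc \<rho> k n" by (intro Kc_nonneg rho_nn) auto

lemma NN: "is_norm N" by (rule N_norm)

lemma N_nonneg': "0 \<le> N v" by (rule N_nonneg[OF N_norm])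

end

context L begin

lemma step:
  assumes k: "1 \<le> k" "k < n"
   and m1: "gg (Suc k) \<in> borel_measurable (PiM {1..Suc k} (\<lambda>_. borel))"
   and l1: "\<forall>x\<in>space (PiM {1..Suc k} (\<lambda>_. borel)). \<forall>x'\<in>space (PiM {1..Suc k} (\<lambda>_. borel)).
        N (gg (Suc k) x - gg (Suc k) x') \<le> (\<Sum>i\<in>{1..<Suc k}. dist (x i) (x' i)) + Kc \<rho> (Suc k) n * dist (x (Suc k)) (x' (Suc k))"
   and i1: "integrable M (\<lambda>\<omega>. gg (Suc k) (Xvec X (Suc k) \<omega>))"
  shows step_sec: "\<And>x. x \<in> space (PiM {1..k} (\<lambda>_. borel)) \<Longrightarrow> integrable Pe (\<lambda>y. gg (Suc k) (upd k x y))"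
   and step_meas: "gg k \<in> borel_measurable (PiM {1..k} (\<lambda>_. borel))"
   and step_lip: "\<And>x x'. x \<in> space (PiM {1..k} (\<lambda>_. borel)) \<Longrightarrow> x' \<in> space (PiM {1..k} (\<lambda>_. borel)) \<Longrightarrow>
        N (gg k x - gg k x') \<le> (\<Sum>i\<in>{1..<k}. dist (x i) (x' i)) + Kc \<rho> k n * dist (x k) (x' k)"
   and step_int: "integrable M (\<lambda>\<omega>. gg k (Xvec X k \<omega>))"
   and step_ce: "\<And>B. B \<in> sets (PiM {1..k} (\<lambda>_. borel)) \<Longrightarrow>
        (\<integral>\<omega>. indicator B (Xvec X k \<omega>) *\<^sub>R gg k (Xvec X k \<omega>) \<partial>M) =
        (\<integral>\<omega>. indicator B (Xvec X k \<omega>) *\<^sub>R gg (Suc k) (Xvec X (Suc k) \<omega>) \<partial>M)"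
proof -
  let ?PK = "PiM {1..k} (\<lambda>_. (borel :: 'x measure))"
  define \<psi> where "\<psi> = (\<lambda>p. gg (Suc k) (upd k (fst p) (snd p)))"
  have \<psi>m: "\<psi> \<in> borel_measurable (?PK \<Otimes>\<^sub>M borel)"
    unfolding \<psi>_def using measurable_comp[OF upd_meas[OF k(1)] m1] by (simp add: comp_def)
  have setsQ: "sets (Pk k \<Otimes>\<^sub>M Pe) = sets (?PK \<Otimes>\<^sub>M borel)"
    by (rule sets_pair_measure_cong) simp_all
  have setsQ': "sets (?PK \<Otimes>\<^sub>M Pe) = sets (?PK \<Otimes>\<^sub>M borel)"
    by (rule sets_pair_measure_cong) simp_all
  have \<psi>m': "\<psi> \<in> borel_measurable (Pk k \<Otimes>\<^sub>M Pe)"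
    using \<psi>m measurable_cong_sets[OF setsQ refl] by simp
  have pm: "(\<lambda>\<omega>. (Xvec X k \<omega>, \<epsilon> (Suc k) \<omega>)) \<in> M \<rightarrow>\<^sub>M ?PK \<Otimes>\<^sub>M borel"
    by (intro measurable_Pair Xvec_meas eps_meas)
  have jd: "Pk k \<Otimes>\<^sub>M Pe = distr M (?PK \<Otimes>\<^sub>M borel) (\<lambda>\<omega>. (Xvec X k \<omega>, \<epsilon> (Suc k) \<omega>))"
    using joint_distr[OF k(1)] by simp
  have \<psi>comp: "\<psi> (Xvec X k \<omega>, \<epsilon> (Suc k) \<omega>) = gg (Suc k) (Xvec X (Suc k) \<omega>)" for \<omega>
    unfolding \<psi>_def using Xvec_upd[OF k(1)] by simp
  have \<psi>int: "integrable (Pk k \<Otimes>\<^sub>M Pe) \<psi>"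
    unfolding jd integrable_distr_eq[OF pm \<psi>m] \<psi>comp by (rule i1)
  have sfk: "sigma_finite_measure (Pk k)" "sigma_finite_measure Pe"
    using Xvec_meas eps_meas by (auto intro!: prob_space_imp_sigma_finite prob_space_distr)
  interpret PS: pair_sigma_finite "Pk k" Pe
    unfolding pair_sigma_finite_def using sfk by simp
  have pPk: "prob_space (Pk k)" using Xvec_meas by (intro prob_space_distr)
  have pPe: "prob_space Pe" using eps_meas by (intro prob_space_distr)
  have spPk: "space (Pk k) = space ?PK" by simp
  have AEi: "AE x in Pk k. integrable Pe (\<lambda>y. \<psi> (x, y))"
    by (rule PS.AE_integrable_fst'[OF \<psi>int])
  have "\<exists>x0\<in>space ?PK. integrable Pe (\<lambda>y. \<psi> (x0, y))"
  proof (rule ccontr)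
    assume nex: "\<not> ?thesis"
    have "AE x in Pk k. False"
      using AEi by (rule AE_mp) (rule AE_I2, use nex in auto)
    thus False using prob_space.AE_False[OF pPk] by simp
  qed
  then obtain x0 where x0: "x0 \<in> space ?PK" "integrable Pe (\<lambda>y. \<psi> (x0, y))" by blast
  obtain c where c: "c > 0" "\<And>v. norm v \<le> c * N v" using N_equiv[OF N_norm] by blast
  have secm: "(\<lambda>y. \<psi> (x, y)) \<in> borel_measurable Pe" if "x \<in> space ?PK" for x
  proof -
    have "(\<lambda>y. (x, y)) \<in> (borel::'y measure) \<rightarrow>\<^sub>M ?PK \<Otimes>\<^sub>M borel"
      using that by (rule measurable_Pair1')
    from measurable_comp[OF this \<psi>m] show ?thesis by (simp add: comp_def)
  qed
  have updlow: "upd k x y i = x i" if "i \<in> {1..<Suc k}" for x y i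
    using that by (simp add: upd_def)
  have updtop: "upd k x y (Suc k) = F (Suc k) (x k) y" for x y
    by (simp add: upd_def)
  have lipu: "N (\<psi> (x, y) - \<psi> (x', y)) \<le> (\<Sum>i\<in>{1..<Suc k}. dist (x i) (x' i))
       + Kc \<rho> (Suc k) n * dist (F (Suc k) (x k) y) (F (Suc k) (x' k) y)"
    if "x \<in> space ?PK" "x' \<in> space ?PK" for x x' y
  proof -
    have "N (\<psi> (x, y) - \<psi> (x', y)) \<le> (\<Sum>i\<in>{1..<Suc k}. dist (upd k x y i) (upd k x' y i))
       + Kc \<rho> (Suc k) n * dist (upd k x y (Suc k)) (upd k x' y (Suc k))"
      unfolding \<psi>_def fst_conv snd_conv by (intro l1[rule_format] upd_space that)
    also have "(\<Sum>i\<in>{1..<Suc k}. dist (upd k x y i) (upd k x' y i)) = (\<Sum>i\<in>{1..<Suc k}. dist (x i) (x' i))"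
      by (intro sum.cong refl) (simp add: updlow)
    finally show ?thesis unfolding updtop .
  qed
  have K1: "0 \<le> Kc \<rho> (Suc k) n" by (intro Kc_nn) simp
  have k2: "Suc k \<ge> 2" using k by simp
  show sec: "integrable Pe (\<lambda>y. gg (Suc k) (upd k x y))" if x: "x \<in> space ?PK" for x
  proof -
    define S where "S = (\<Sum>i\<in>{1..<Suc k}. dist (x i) (x0 i))"
    define d where "d = (\<lambda>y. dist (F (Suc k) (x k) y) (F (Suc k) (x0 k) y))"
    define m where "m = (\<lambda>y. norm (\<psi> (x0, y)) + c * (S + Kc \<rho> (Suc k) n * d y))"
    have dint: "integrable Pe d" unfolding d_def by (rule C1'(3)[OF k2])
    have mint: "integrable Pe m"
    proof -
      have ic: "integrable Pe (\<lambda>_. S)" using pPe by (simp add: prob_space.finite_measure finite_measure.integrable_const)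
      have "integrable Pe (\<lambda>y. S + Kc \<rho> (Suc k) n * d y)"
        by (rule Bochner_Integration.integrable_add[OF ic integrable_mult_right[OF dint]])
      from integrable_mult_right[OF this, of c] integrable_norm[OF x0(2)]
      show ?thesis unfolding m_def by (rule Bochner_Integration.integrable_add[rotated])
    qed
    have S0: "0 \<le> S" unfolding S_def by (intro sum_nonneg) simp
    have bnd: "norm (\<psi> (x, y)) \<le> norm (m y)" for y
    proof -
      have "norm (\<psi> (x, y)) \<le> norm (\<psi> (x0, y)) + norm (\<psi> (x, y) - \<psi> (x0, y))"
        by (metis add.commute diff_add_cancel norm_triangle_ineq)
      also have "norm (\<psi> (x, y) - \<psi> (x0, y)) \<le> c * N (\<psi> (x, y) - \<psi> (x0, y))" by (rule c(2))
      also have "N (\<psi> (x, y) - \<psi> (x0, y)) \<le> S + Kc \<rho> (Suc k) n * d y"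
        unfolding S_def d_def by (rule lipu[OF x x0(1)])
      hence "c * N (\<psi> (x, y) - \<psi> (x0, y)) \<le> c * (S + Kc \<rho> (Suc k) n * d y)"
        using c(1) by (intro mult_left_mono) auto
      finally have "norm (\<psi> (x, y)) \<le> m y" unfolding m_def by simp
      moreover have "0 \<le> m y" unfolding m_def d_def using c(1) S0 K1 by (intro add_nonneg_nonneg mult_nonneg_nonneg) auto
      ultimately show ?thesis by simp
    qed
    have "integrable Pe (\<lambda>y. \<psi> (x, y))"
      by (rule Bochner_Integration.integrable_bound[OF mint secm[OF x]]) (use bnd in auto)
    thus ?thesis unfolding \<psi>_def by simp
  qed
  have ggk: "gg k = (\<lambda>x. \<integral>y. \<psi> (x, y) \<partial>Pe)"
    unfolding gg_step[OF k] \<psi>_def by simp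
  show meas: "gg k \<in> borel_measurable ?PK"
  proof -
    have "(\<lambda>(x, y). \<psi> (x, y)) \<in> borel_measurable (?PK \<Otimes>\<^sub>M Pe)"
      using \<psi>m measurable_cong_sets[OF setsQ' refl] by simp
    from sigma_finite_measure.borel_measurable_lebesgue_integral[OF sfk(2) this]
    show ?thesis unfolding ggk .
  qed
  show "N (gg k x - gg k x') \<le> (\<Sum>i\<in>{1..<k}. dist (x i) (x' i)) + Kc \<rho> k n * dist (x k) (x' k)"
    if x: "x \<in> space ?PK" and x': "x' \<in> space ?PK" for x x'
  proof -
    define S where "S = (\<Sum>i\<in>{1..<k}. dist (x i) (x' i))"
    define d where "d = (\<lambda>y. dist (F (Suc k) (x k) y) (F (Suc k) (x' k) y))"
    define h where "h = (\<lambda>y. \<psi> (x, y) - \<psi> (x', y))"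
    have sumsplit: "(\<Sum>i\<in>{1..<Suc k}. dist (x i) (x' i)) = S + dist (x k) (x' k)"
    proof -
      have "{1..<Suc k} = insert k {1..<k}" using k by auto
      thus ?thesis unfolding S_def by simp
    qed
    have S0: "0 \<le> S" unfolding S_def by (intro sum_nonneg) simp
    have hm: "h \<in> borel_measurable Pe" unfolding h_def using secm[OF x] secm[OF x'] by simp
    have ix: "integrable Pe (\<lambda>y. \<psi> (x, y))" "integrable Pe (\<lambda>y. \<psi> (x', y))"
      using sec[OF x] sec[OF x'] unfolding \<psi>_def by simp_all
    have diff: "gg k x - gg k x' = (\<integral>y. h y \<partial>Pe)"
      unfolding ggk h_def using ix by simp
    have dm: "d \<in> borel_measurable Pe" unfolding d_def using C1'(2)[OF k2] by simp
    have d0: "\<And>y. 0 \<le> d y" unfolding d_def by simp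
    have "ennreal (N (gg k x - gg k x')) \<le> (\<integral>\<^sup>+y. ennreal (N (h y)) \<partial>Pe)"
      unfolding diff using hm by (rule N_jensen_eps)
    also have "\<dots> \<le> (\<integral>\<^sup>+y. (ennreal (S + dist (x k) (x' k)) + ennreal (Kc \<rho> (Suc k) n) * ennreal (d y)) \<partial>Pe)"
    proof (rule nn_integral_mono)
      fix y
      have "N (h y) \<le> S + dist (x k) (x' k) + Kc \<rho> (Suc k) n * d y"
        unfolding h_def d_def using lipu[OF x x', of y] sumsplit by simp
      hence "ennreal (N (h y)) \<le> ennreal (S + dist (x k) (x' k) + Kc \<rho> (Suc k) n * d y)"
        by (rule ennreal_leI)
      also have "\<dots> = ennreal (S + dist (x k) (x' k)) + ennreal (Kc \<rho> (Suc k) n * d y)"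
        by (rule ennreal_plus) (use S0 K1 d0[of y] in auto)
      also have "ennreal (Kc \<rho> (Suc k) n * d y) = ennreal (Kc \<rho> (Suc k) n) * ennreal (d y)"
        by (rule ennreal_mult) (use K1 d0[of y] in auto)
      finally show "ennreal (N (h y)) \<le> ennreal (S + dist (x k) (x' k)) + ennreal (Kc \<rho> (Suc k) n) * ennreal (d y)" .
    qed
    also have "\<dots> = ennreal (S + dist (x k) (x' k)) + ennreal (Kc \<rho> (Suc k) n) * (\<integral>\<^sup>+y. ennreal (d y) \<partial>Pe)"
    proof -
      have m1: "(\<lambda>y. ennreal (Kc \<rho> (Suc k) n) * ennreal (d y)) \<in> borel_measurable Pe" using dm by simp
      have "(\<integral>\<^sup>+y. (ennreal (S + dist (x k) (x' k)) + ennreal (Kc \<rho> (Suc k) n) * ennreal (d y)) \<partial>Pe)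
         = (\<integral>\<^sup>+y. ennreal (S + dist (x k) (x' k)) \<partial>Pe) + (\<integral>\<^sup>+y. ennreal (Kc \<rho> (Suc k) n) * ennreal (d y) \<partial>Pe)"
        by (rule nn_integral_add[OF _ m1]) simp
      also have "(\<integral>\<^sup>+y. ennreal (S + dist (x k) (x' k)) \<partial>Pe) = ennreal (S + dist (x k) (x' k))"
        using prob_space.emeasure_space_1[OF pPe] by (simp add: nn_integral_const)
      also have "(\<integral>\<^sup>+y. ennreal (Kc \<rho> (Suc k) n) * ennreal (d y) \<partial>Pe) = ennreal (Kc \<rho> (Suc k) n) * (\<integral>\<^sup>+y. ennreal (d y) \<partial>Pe)"
        by (rule nn_integral_cmult) (use dm in simp)
      finally show ?thesis .
    qed
    also have "(\<integral>\<^sup>+y. ennreal (d y) \<partial>Pe) \<le> ennreal (\<rho> (Suc k) * dist (x k) (x' k))"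
      unfolding d_def by (rule C1'(1)[OF k2])
    hence "ennreal (S + dist (x k) (x' k)) + ennreal (Kc \<rho> (Suc k) n) * (\<integral>\<^sup>+y. ennreal (d y) \<partial>Pe)
        \<le> ennreal (S + dist (x k) (x' k)) + ennreal (Kc \<rho> (Suc k) n) * ennreal (\<rho> (Suc k) * dist (x k) (x' k))"
      by (intro add_left_mono mult_left_mono) auto
    also have "\<dots> = ennreal (S + (1 + \<rho> (Suc k) * Kc \<rho> (Suc k) n) * dist (x k) (x' k))"
    proof -
      have r0: "0 \<le> \<rho> (Suc k) * dist (x k) (x' k)" using rho_nn[OF k2] by simp
      have "ennreal (Kc \<rho> (Suc k) n) * ennreal (\<rho> (Suc k) * dist (x k) (x' k)) = ennreal (Kc \<rho> (Suc k) n * (\<rho> (Suc k) * dist (x k) (x' k)))"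
        by (rule ennreal_mult[symmetric]) (use K1 r0 in auto)
      also have "ennreal (S + dist (x k) (x' k)) + \<dots> = ennreal (S + dist (x k) (x' k) + Kc \<rho> (Suc k) n * (\<rho> (Suc k) * dist (x k) (x' k)))"
        by (rule ennreal_plus[symmetric]) (use S0 K1 r0 in auto)
      also have "S + dist (x k) (x' k) + Kc \<rho> (Suc k) n * (\<rho> (Suc k) * dist (x k) (x' k)) = S + (1 + \<rho> (Suc k) * Kc \<rho> (Suc k) n) * dist (x k) (x' k)"
        by (simp add: algebra_simps)
      finally show ?thesis by simp
    qed
    finally have fin: "ennreal (N (gg k x - gg k x')) \<le> ennreal (S + (1 + \<rho> (Suc k) * Kc \<rho> (Suc k) n) * dist (x k) (x' k))" .
    have "0 \<le> S + (1 + \<rho> (Suc k) * Kc \<rho> (Suc k) n) * dist (x k) (x' k)"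
      using S0 K1 rho_nn[OF k2] by simp
    hence "N (gg k x - gg k x') \<le> S + (1 + \<rho> (Suc k) * Kc \<rho> (Suc k) n) * dist (x k) (x' k)"
      using fin ennreal_le_iff by blast
    thus ?thesis unfolding S_def Kc_rec[OF k(2)] .
  qed
  have intk: "integrable (Pk k) (gg k)"
    unfolding ggk by (rule PS.integrable_fst'[OF \<psi>int])
  show "integrable M (\<lambda>\<omega>. gg k (Xvec X k \<omega>))"
    using intk integrable_distr_eq[OF Xvec_meas meas] by simp
  show "(\<integral>\<omega>. indicator B (Xvec X k \<omega>) *\<^sub>R gg k (Xvec X k \<omega>) \<partial>M) =
        (\<integral>\<omega>. indicator B (Xvec X k \<omega>) *\<^sub>R gg (Suc k) (Xvec X (Suc k) \<omega>) \<partial>M)"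
    if B: "B \<in> sets ?PK" for B
  proof -
    define \<phi> where "\<phi> = (\<lambda>p. indicator B (fst p) *\<^sub>R \<psi> p)"
    have \<phi>m: "\<phi> \<in> borel_measurable (?PK \<Otimes>\<^sub>M borel)"
      unfolding \<phi>_def using \<psi>m B by (intro borel_measurable_scaleR borel_measurable_indicator measurable_compose[OF measurable_fst]) auto
    have ind: "indicator B (fst p) = indicator (B \<times> space Pe) p" for p :: "(nat \<Rightarrow> 'x) \<times> 'y"
      by (cases p) (simp add: indicator_def)
    have BU: "B \<times> space Pe \<in> sets (Pk k \<Otimes>\<^sub>M Pe)" using B by (intro pair_measureI) auto
    have \<phi>int: "integrable (Pk k \<Otimes>\<^sub>M Pe) \<phi>"
      unfolding \<phi>_def ind using BU \<psi>int by (rule integrable_mult_indicator)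
    have gm: "(\<lambda>x. indicator B x *\<^sub>R gg k x) \<in> borel_measurable ?PK"
      using meas B by (intro borel_measurable_scaleR borel_measurable_indicator)
    have "(\<integral>\<omega>. indicator B (Xvec X k \<omega>) *\<^sub>R gg k (Xvec X k \<omega>) \<partial>M) = (\<integral>x. indicator B x *\<^sub>R gg k x \<partial>Pk k)"
      by (rule integral_distr[OF Xvec_meas gm, symmetric])
    also have "\<dots> = (\<integral>x. (\<integral>y. \<phi> (x, y) \<partial>Pe) \<partial>Pk k)"
      unfolding ggk \<phi>_def by simp
    also have "\<dots> = (\<integral>p. \<phi> p \<partial>(Pk k \<Otimes>\<^sub>M Pe))"
      by (rule PS.integral_fst'[OF \<phi>int])
    also have "\<dots> = (\<integral>\<omega>. \<phi> (Xvec X k \<omega>, \<epsilon> (Suc k) \<omega>) \<partial>M)"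
      unfolding jd by (rule integral_distr[OF pm \<phi>m])
    also have "\<dots> = (\<integral>\<omega>. indicator B (Xvec X k \<omega>) *\<^sub>R gg (Suc k) (Xvec X (Suc k) \<omega>) \<partial>M)"
      unfolding \<phi>_def by (simp add: \<psi>comp)
    finally show ?thesis .
  qed
qed

end

context L begin

lemma levels:
  assumes "1 \<le> k" "k \<le> n"
  shows "gg k \<in> borel_measurable (PiM {1..k} (\<lambda>_. borel))
    \<and> (\<forall>x\<in>space (PiM {1..k} (\<lambda>_. borel)). \<forall>x'\<in>space (PiM {1..k} (\<lambda>_. borel)).
        N (gg k x - gg k x') \<le> (\<Sum>i\<in>{1..<k}. dist (x i) (x' i)) + Kc \<rho> k n * dist (x k) (x' k))
    \<and> integrable M (\<lambda>\<omega>. gg k (Xvec X k \<omega>))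
    \<and> (\<forall>B\<in>sets (PiM {1..k} (\<lambda>_. borel)).
        (\<integral>\<omega>. indicator B (Xvec X k \<omega>) *\<^sub>R gg k (Xvec X k \<omega>) \<partial>M) =
        (\<integral>\<omega>. indicator B (Xvec X k \<omega>) *\<^sub>R f (Xvec X n \<omega>) \<partial>M))"
  using assms
proof (induction "n - k" arbitrary: k)
  case 0
  hence kn: "k = n" by simp
  have lip: "N (gg k x - gg k x') \<le> (\<Sum>i\<in>{1..<k}. dist (x i) (x' i)) + Kc \<rho> k n * dist (x k) (x' k)"
    if "x \<in> space (PiM {1..k} (\<lambda>_. borel))" "x' \<in> space (PiM {1..k} (\<lambda>_. borel))" for x x'
  proof -
    have "{1..n} = insert n {1..<n}" using n2 by auto
    hence "(\<Sum>i=1..n. dist (x i) (x' i)) = (\<Sum>i\<in>{1..<n}. dist (x i) (x' i)) + dist (x n) (x' n)" by simp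
    thus ?thesis using f_lip[of x x'] that unfolding kn gg_n by (simp add: Kc_self)
  qed
  show ?case unfolding kn gg_n using f_meas f_int lip[unfolded kn gg_n] by blast
next
  case (Suc d)
  hence kn: "k < n" "1 \<le> k" and d: "d = n - Suc k" by auto
  have IH: "gg (Suc k) \<in> borel_measurable (PiM {1..Suc k} (\<lambda>_. borel))
    \<and> (\<forall>x\<in>space (PiM {1..Suc k} (\<lambda>_. borel)). \<forall>x'\<in>space (PiM {1..Suc k} (\<lambda>_. borel)).
        N (gg (Suc k) x - gg (Suc k) x') \<le> (\<Sum>i\<in>{1..<Suc k}. dist (x i) (x' i)) + Kc \<rho> (Suc k) n * dist (x (Suc k)) (x' (Suc k)))
    \<and> integrable M (\<lambda>\<omega>. gg (Suc k) (Xvec X (Suc k) \<omega>))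
    \<and> (\<forall>B\<in>sets (PiM {1..Suc k} (\<lambda>_. borel)).
        (\<integral>\<omega>. indicator B (Xvec X (Suc k) \<omega>) *\<^sub>R gg (Suc k) (Xvec X (Suc k) \<omega>) \<partial>M) =
        (\<integral>\<omega>. indicator B (Xvec X (Suc k) \<omega>) *\<^sub>R f (Xvec X n \<omega>) \<partial>M))"
    using Suc.hyps(1)[OF d] kn by simp
  have m1: "gg (Suc k) \<in> borel_measurable (PiM {1..Suc k} (\<lambda>_. borel))" using IH by blast
  have l1: "\<forall>x\<in>space (PiM {1..Suc k} (\<lambda>_. borel)). \<forall>x'\<in>space (PiM {1..Suc k} (\<lambda>_. borel)).
        N (gg (Suc k) x - gg (Suc k) x') \<le> (\<Sum>i\<in>{1..<Suc k}. dist (x i) (x' i)) + Kc \<rho> (Suc k) n * dist (x (Suc k)) (x' (Suc k))"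
    using IH by blast
  have i1: "integrable M (\<lambda>\<omega>. gg (Suc k) (Xvec X (Suc k) \<omega>))" using IH by blast
  have c1: "\<And>B. B \<in> sets (PiM {1..Suc k} (\<lambda>_. borel)) \<Longrightarrow>
        (\<integral>\<omega>. indicator B (Xvec X (Suc k) \<omega>) *\<^sub>R gg (Suc k) (Xvec X (Suc k) \<omega>) \<partial>M) =
        (\<integral>\<omega>. indicator B (Xvec X (Suc k) \<omega>) *\<^sub>R f (Xvec X n \<omega>) \<partial>M)" using IH by blast
  note st = step[OF kn(2) kn(1) m1 l1 i1]
  have ce: "(\<integral>\<omega>. indicator B (Xvec X k \<omega>) *\<^sub>R gg k (Xvec X k \<omega>) \<partial>M) =
        (\<integral>\<omega>. indicator B (Xvec X k \<omega>) *\<^sub>R f (Xvec X n \<omega>) \<partial>M)"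
    if B: "B \<in> sets (PiM {1..k} (\<lambda>_. borel))" for B
  proof -
    define B' where "B' = (\<lambda>x. restrict x {1..k}) -` B \<inter> space (PiM {1..Suc k} (\<lambda>_. (borel :: 'x measure)))"
    have rm: "(\<lambda>x. restrict x {1..k}) \<in> PiM {1..Suc k} (\<lambda>_. (borel :: 'x measure)) \<rightarrow>\<^sub>M PiM {1..k} (\<lambda>_. borel)"
      by (rule measurable_restrict_subset) auto
    have B': "B' \<in> sets (PiM {1..Suc k} (\<lambda>_. borel))" unfolding B'_def by (rule measurable_sets[OF rm B])
    have rx: "restrict (Xvec X (Suc k) \<omega>) {1..k} = Xvec X k \<omega>" for \<omega>
      by (auto simp: Xvec_def fun_eq_iff)
    have ind: "indicator B (Xvec X k \<omega>) = (indicator B' (Xvec X (Suc k) \<omega>) :: real)" for \<omega>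
    proof -
      have "(indicator B' (Xvec X (Suc k) \<omega>) :: real) = indicator B (restrict (Xvec X (Suc k) \<omega>) {1..k})"
        unfolding B'_def indicator_def using Xvec_space[of "Suc k" \<omega>] by simp
      thus ?thesis unfolding rx by simp
    qed
    have "(\<integral>\<omega>. indicator B (Xvec X k \<omega>) *\<^sub>R gg k (Xvec X k \<omega>) \<partial>M) =
        (\<integral>\<omega>. indicator B (Xvec X k \<omega>) *\<^sub>R gg (Suc k) (Xvec X (Suc k) \<omega>) \<partial>M)"
      by (rule st(5)[OF B])
    also have "\<dots> = (\<integral>\<omega>. indicator B (Xvec X k \<omega>) *\<^sub>R f (Xvec X n \<omega>) \<partial>M)"
      unfolding ind using c1[OF B'] by simp
    finally show ?thesis .
  qed
  show ?case using st(2) st(3) st(4) ce by blast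
qed

lemma sec_int:
  assumes "1 \<le> k" "k < n" "x \<in> space (PiM {1..k} (\<lambda>_. borel))"
  shows "integrable Pe (\<lambda>y. gg (Suc k) (upd k x y))"
proof -
  have lv: "gg (Suc k) \<in> borel_measurable (PiM {1..Suc k} (\<lambda>_. borel))
    \<and> (\<forall>x\<in>space (PiM {1..Suc k} (\<lambda>_. borel)). \<forall>x'\<in>space (PiM {1..Suc k} (\<lambda>_. borel)).
        N (gg (Suc k) x - gg (Suc k) x') \<le> (\<Sum>i\<in>{1..<Suc k}. dist (x i) (x' i)) + Kc \<rho> (Suc k) n * dist (x (Suc k)) (x' (Suc k)))
    \<and> integrable M (\<lambda>\<omega>. gg (Suc k) (Xvec X (Suc k) \<omega>))
    \<and> (\<forall>B\<in>sets (PiM {1..Suc k} (\<lambda>_. borel)).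
        (\<integral>\<omega>. indicator B (Xvec X (Suc k) \<omega>) *\<^sub>R gg (Suc k) (Xvec X (Suc k) \<omega>) \<partial>M) =
        (\<integral>\<omega>. indicator B (Xvec X (Suc k) \<omega>) *\<^sub>R f (Xvec X n \<omega>) \<partial>M))"
    by (rule levels) (use assms in simp_all)
  show ?thesis
    by (rule step(1)[OF assms(1,2) conjunct1[OF lv] conjunct1[OF conjunct2[OF lv]]
          conjunct1[OF conjunct2[OF conjunct2[OF lv]]] assms(3)])
qed

lemma Filt_sets:
  assumes "A \<in> sets (Filt M X k)"
  shows "\<exists>B\<in>sets (PiM {1..k} (\<lambda>_. borel)). A = Xvec X k -` B \<inter> space M"
proof -
  have "Xvec X k \<in> space M \<rightarrow> space (PiM {1..k} (\<lambda>_. (borel::'x measure)))"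
    using Xvec_space by auto
  from sets_vimage_algebra2[OF this] assms show ?thesis unfolding Filt_def by blast
qed

lemma cond_exp_pos:
  assumes "1 \<le> k" "k \<le> n"
  shows "is_cond_exp_version M (Filt M X k) (\<lambda>\<omega>. f (Xvec X n \<omega>)) (\<lambda>\<omega>. gg k (Xvec X k \<omega>))"
proof -
  note lv = levels[OF assms]
  have xm: "Xvec X k \<in> Filt M X k \<rightarrow>\<^sub>M PiM {1..k} (\<lambda>_. borel)"
    unfolding Filt_def by (rule measurable_vimage_algebra1) (use Xvec_space in auto)
  have m: "(\<lambda>\<omega>. gg k (Xvec X k \<omega>)) \<in> borel_measurable (Filt M X k)"
    using measurable_comp[OF xm, of "gg k" borel] lv by (simp add: comp_def)
  have ce: "(LINT \<omega>:A|M. gg k (Xvec X k \<omega>)) = (LINT \<omega>:A|M. f (Xvec X n \<omega>))"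
    if A: "A \<in> sets (Filt M X k)" for A
  proof -
    obtain B where B: "B \<in> sets (PiM {1..k} (\<lambda>_. borel))" "A = Xvec X k -` B \<inter> space M"
      using Filt_sets[OF A] by blast
    have "(LINT \<omega>:A|M. gg k (Xvec X k \<omega>)) = (\<integral>\<omega>. indicator B (Xvec X k \<omega>) *\<^sub>R gg k (Xvec X k \<omega>) \<partial>M)"
      unfolding set_lebesgue_integral_def B(2) by (intro Bochner_Integration.integral_cong) (auto simp: indicator_def)
    also have "\<dots> = (\<integral>\<omega>. indicator B (Xvec X k \<omega>) *\<^sub>R f (Xvec X n \<omega>) \<partial>M)" using lv B(1) by blast
    also have "\<dots> = (LINT \<omega>:A|M. f (Xvec X n \<omega>))"
      unfolding set_lebesgue_integral_def B(2) by (intro Bochner_Integration.integral_cong) (auto simp: indicator_def)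
    finally show ?thesis .
  qed
  show ?thesis unfolding is_cond_exp_version_def using m lv ce by blast
qed

lemma upd0: "(\<lambda>_. undefined)(1 := z) = (\<lambda>i\<in>{1..1::nat}. z)"
  by (auto simp: fun_eq_iff)

lemma Xvec1: "Xvec X 1 \<omega> = (\<lambda>_. undefined)(1 := X 1 \<omega>)"
  by (auto simp: Xvec_def fun_eq_iff)

lemma e1_meas: "(\<lambda>z. (\<lambda>_. undefined)(1::nat := z)) \<in> (borel :: 'x measure) \<rightarrow>\<^sub>M PiM {1..1::nat} (\<lambda>_. borel)"
proof -
  have e: "(\<lambda>z. (\<lambda>_. undefined)(1::nat := z)) = (\<lambda>z::'x. \<lambda>i\<in>{1..1::nat}. z)" by (auto simp: fun_eq_iff)
  have "(\<lambda>z::'x. \<lambda>i\<in>{1..1::nat}. z) \<in> (borel :: 'x measure) \<rightarrow>\<^sub>M PiM {1..1} (\<lambda>_. borel)"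
    by (rule measurable_restrict) simp
  thus ?thesis unfolding e .
qed

lemma g1_PX: "integrable PX (\<lambda>z. gg 1 ((\<lambda>_. undefined)(1 := z)))"
  and g1_PX_int: "(\<integral>z. gg 1 ((\<lambda>_. undefined)(1 := z)) \<partial>PX) = (\<integral>\<omega>. gg 1 (Xvec X 1 \<omega>) \<partial>M)"
proof -
  note lv = levels[of 1]
  have g1m: "gg 1 \<in> borel_measurable (PiM {1..1} (\<lambda>_. (borel :: 'x measure)))" using lv n2 by simp
  have gm: "(\<lambda>z. gg 1 ((\<lambda>_. undefined)(1 := z))) \<in> borel_measurable borel"
    using measurable_comp[OF e1_meas g1m] by (simp add: comp_def)
  show "integrable PX (\<lambda>z. gg 1 ((\<lambda>_. undefined)(1 := z)))"
    unfolding integrable_distr_eq[OF X1_meas gm] Xvec1[symmetric] using lv n2 by simp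
  show "(\<integral>z. gg 1 ((\<lambda>_. undefined)(1 := z)) \<partial>PX) = (\<integral>\<omega>. gg 1 (Xvec X 1 \<omega>) \<partial>M)"
    unfolding integral_distr[OF X1_meas gm] Xvec1[symmetric] ..
qed

lemma cond_exp_0:
  "is_cond_exp_version M (Filt M X 0) (\<lambda>\<omega>. f (Xvec X n \<omega>)) (\<lambda>\<omega>. gg 0 (Xvec X 0 \<omega>))"
proof -
  define c where "c = (\<integral>z. gg 1 ((\<lambda>_. undefined)(1 := z)) \<partial>PX)"
  have g0: "gg 0 y = c" for y unfolding gg_0 c_def by simp
  have ce: "(LINT \<omega>:A|M. c) = (LINT \<omega>:A|M. f (Xvec X n \<omega>))" if A: "A \<in> sets (Filt M X 0)" for A
  proof -
    obtain B where B: "A = Xvec X 0 -` B \<inter> space M" using Filt_sets[OF A] by blast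
    have x0: "Xvec X 0 \<omega> = (\<lambda>_. undefined)" for \<omega> by (simp add: Xvec_def fun_eq_iff)
    show ?thesis
    proof (cases "(\<lambda>_. undefined) \<in> B")
      case False
      hence "A = {}" unfolding B x0 by auto
      thus ?thesis by (simp add: set_lebesgue_integral_def)
    next
      case True
      hence Asp: "A = space M" unfolding B x0 by auto
      have "(LINT \<omega>:A|M. f (Xvec X n \<omega>)) = (\<integral>\<omega>. f (Xvec X n \<omega>) \<partial>M)"
        unfolding Asp set_lebesgue_integral_def
        by (intro Bochner_Integration.integral_cong) (auto simp: indicator_def)
      also have "\<dots> = (\<integral>\<omega>. indicator (space (PiM {1..1} (\<lambda>_. (borel::'x measure)))) (Xvec X 1 \<omega>) *\<^sub>R f (Xvec X n \<omega>) \<partial>M)"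
        using Xvec_space[of 1] by (simp add: indicator_def)
      also have "\<dots> = (\<integral>\<omega>. indicator (space (PiM {1..1} (\<lambda>_. (borel::'x measure)))) (Xvec X 1 \<omega>) *\<^sub>R gg 1 (Xvec X 1 \<omega>) \<partial>M)"
      proof -
        have "1 \<le> (1::nat)" "1 \<le> n" using n2 by simp_all
        note lv1 = conjunct2[OF conjunct2[OF conjunct2[OF levels[OF this]]]]
        show ?thesis using lv1[rule_format, OF sets.top] by (rule sym)
      qed
      also have "\<dots> = (\<integral>\<omega>. gg 1 (Xvec X 1 \<omega>) \<partial>M)"
        using Xvec_space[of 1] by (simp add: indicator_def)
      also have "\<dots> = c" unfolding c_def g1_PX_int ..
      also have "c = (LINT \<omega>:A|M. c)"
        unfolding Asp set_lebesgue_integral_def using prob_space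
        by (subst Bochner_Integration.integral_cong[where g="\<lambda>_. c"]) (auto simp: indicator_def prob_space_def)
      finally show ?thesis ..
    qed
  qed
  have m: "(\<lambda>\<omega>. gg 0 (Xvec X 0 \<omega>)) \<in> borel_measurable (Filt M X 0)" unfolding g0 by simp
  have i: "integrable M (\<lambda>\<omega>. gg 0 (Xvec X 0 \<omega>))" unfolding g0 by simp
  show ?thesis unfolding is_cond_exp_version_def using m i ce unfolding g0 by blast
qed

end

context L begin

lemma Fx_meas: assumes "m \<ge> 2" shows "F m z \<in> borel_measurable borel"
proof -
  have "(\<lambda>y. (z, y)) \<in> (borel::'y measure) \<rightarrow>\<^sub>M (borel::'x measure) \<Otimes>\<^sub>M borel" by simp
  from measurable_compose[OF this F_meas[OF assms]] show ?thesis by simp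
qed

lemma pPe: "prob_space Pe" using eps_meas by (intro prob_space_distr)
lemma pPX: "prob_space PX" using X1_meas by (intro prob_space_distr)

lemma mart_k:
  assumes k: "2 \<le> k" "k \<le> n" and \<omega>: "\<omega> \<in> space M"
  shows "ennreal (N (gg k (Xvec X k \<omega>) - gg (k - 1) (Xvec X (k - 1) \<omega>)))
     \<le> ennreal (Kc \<rho> k n) * (\<integral>\<^sup>+y'. ennreal (dist (F k (X (k - 1) \<omega>) (\<epsilon> k \<omega>)) (F k (X (k - 1) \<omega>) y')) \<partial>Pe)"
proof -
  define j where "j = k - 1"
  have j: "1 \<le> j" "j < n" "Suc j = k" using k by (auto simp: j_def)
  define u where "u = Xvec X j \<omega>"
  have u: "u \<in> space (PiM {1..j} (\<lambda>_. borel))" unfolding u_def by (rule Xvec_space)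
  have uj: "u j = X j \<omega>" unfolding u_def Xvec_def using j by simp
  define a where "a = gg k (upd j u (\<epsilon> k \<omega>))"
  have lvk: "gg k \<in> borel_measurable (PiM {1..k} (\<lambda>_. borel))
    \<and> (\<forall>x\<in>space (PiM {1..k} (\<lambda>_. borel)). \<forall>x'\<in>space (PiM {1..k} (\<lambda>_. borel)).
        N (gg k x - gg k x') \<le> (\<Sum>i\<in>{1..<k}. dist (x i) (x' i)) + Kc \<rho> k n * dist (x k) (x' k))"
    using levels[of k] k by simp
  have secm: "(\<lambda>y. gg k (upd j u y)) \<in> borel_measurable Pe"
  proof -
    have "(\<lambda>y. (u, y)) \<in> (borel::'y measure) \<rightarrow>\<^sub>M PiM {1..j} (\<lambda>_. (borel::'x measure)) \<Otimes>\<^sub>M borel"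
      using u by (rule measurable_Pair1')
    from measurable_comp[OF this upd_meas[OF j(1)]]
    have "(\<lambda>y. upd j u y) \<in> (borel::'y measure) \<rightarrow>\<^sub>M PiM {1..k} (\<lambda>_. borel)"
      unfolding j(3) by (simp add: comp_def)
    from measurable_comp[OF this conjunct1[OF lvk]] show ?thesis by (simp add: comp_def)
  qed
  have si: "integrable Pe (\<lambda>y. gg k (upd j u y))"
    using sec_int[OF j(1) j(2) u] unfolding j(3) .
  have e1: "gg k (Xvec X k \<omega>) = a" unfolding a_def u_def using Xvec_upd[OF j(1), of \<omega>] j(3) by simp
  have e2: "gg (k - 1) (Xvec X (k - 1) \<omega>) = (\<integral>y. gg k (upd j u y) \<partial>Pe)"
    unfolding j_def[symmetric] u_def[symmetric] gg_step[OF j(1) j(2)] j(3) ..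
  have ic: "integrable Pe (\<lambda>_. a)" using pPe by (simp add: prob_space.finite_measure finite_measure.integrable_const)
  have diff: "a - (\<integral>y. gg k (upd j u y) \<partial>Pe) = (\<integral>y. (a - gg k (upd j u y)) \<partial>Pe)"
    using ic si prob_space.prob_space[OF pPe] by (simp add: measure_def prob_space.emeasure_space_1[OF pPe])
  define D where "D = (\<lambda>y'. dist (F k (X j \<omega>) (\<epsilon> k \<omega>)) (F k (X j \<omega>) y'))"
  have Dm: "D \<in> borel_measurable Pe" unfolding D_def using Fx_meas[OF k(1)] by simp
  have hm: "(\<lambda>y. a - gg k (upd j u y)) \<in> borel_measurable Pe" using secm by simp
  have "ennreal (N (gg k (Xvec X k \<omega>) - gg (k - 1) (Xvec X (k - 1) \<omega>)))
      = ennreal (N (\<integral>y. (a - gg k (upd j u y)) \<partial>Pe))" unfolding e1 e2 diff ..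
  also have "\<dots> \<le> (\<integral>\<^sup>+y. ennreal (N (a - gg k (upd j u y))) \<partial>Pe)"
    using hm by (rule N_jensen_eps)
  also have "\<dots> \<le> (\<integral>\<^sup>+y. ennreal (Kc \<rho> k n) * ennreal (D y) \<partial>Pe)"
  proof (rule nn_integral_mono)
    fix y
    have "N (a - gg k (upd j u y)) \<le> (\<Sum>i\<in>{1..<k}. dist (upd j u (\<epsilon> k \<omega>) i) (upd j u y i))
        + Kc \<rho> k n * dist (upd j u (\<epsilon> k \<omega>) k) (upd j u y k)"
      unfolding a_def using conjunct2[OF lvk] upd_space[OF u] unfolding j(3) by blast
    also have "(\<Sum>i\<in>{1..<k}. dist (upd j u (\<epsilon> k \<omega>) i) (upd j u y i)) = 0"
      using j(3) by (intro sum.neutral) (auto simp: upd_def)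
    also have "dist (upd j u (\<epsilon> k \<omega>) k) (upd j u y k) = D y"
      unfolding D_def upd_def using j(3) uj by auto
    finally have "N (a - gg k (upd j u y)) \<le> Kc \<rho> k n * D y" by simp
    hence "ennreal (N (a - gg k (upd j u y))) \<le> ennreal (Kc \<rho> k n * D y)" by (rule ennreal_leI)
    also have "\<dots> = ennreal (Kc \<rho> k n) * ennreal (D y)"
      by (rule ennreal_mult) (use Kc_nn[of k] k in \<open>auto simp: D_def\<close>)
    finally show "ennreal (N (a - gg k (upd j u y))) \<le> ennreal (Kc \<rho> k n) * ennreal (D y)" .
  qed
  also have "\<dots> = ennreal (Kc \<rho> k n) * (\<integral>\<^sup>+y. ennreal (D y) \<partial>Pe)"
    by (rule nn_integral_cmult) (use Dm in simp)
  finally show ?thesis unfolding D_def j_def .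
qed

lemma mart_1:
  assumes \<omega>: "\<omega> \<in> space M"
  shows "ennreal (N (gg 1 (Xvec X 1 \<omega>) - gg 0 (Xvec X 0 \<omega>)))
     \<le> ennreal (Kc \<rho> 1 n) * (\<integral>\<^sup>+x'. ennreal (dist (X 1 \<omega>) x') \<partial>PX)"
proof -
  define e where "e = (\<lambda>z::'x. (\<lambda>_. undefined)(1::nat := z))"
  have lv1: "gg 1 \<in> borel_measurable (PiM {1..1} (\<lambda>_. borel))
    \<and> (\<forall>x\<in>space (PiM {1..1} (\<lambda>_. borel)). \<forall>x'\<in>space (PiM {1..1} (\<lambda>_. borel)).
        N (gg 1 x - gg 1 x') \<le> (\<Sum>i\<in>{1..<1}. dist (x i) (x' i)) + Kc \<rho> 1 n * dist (x 1) (x' 1))"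
  proof -
    have "1 \<le> (1::nat)" "1 \<le> n" using n2 by simp_all
    from levels[OF this] show ?thesis by blast
  qed
  have esp: "e z \<in> space (PiM {1..1} (\<lambda>_. (borel :: 'x measure)))" for z
    unfolding e_def space_PiM by (auto simp: PiE_iff extensional_def)
  have gm: "(\<lambda>z. gg 1 (e z)) \<in> borel_measurable PX"
    using measurable_comp[OF e1_meas conjunct1[OF lv1]] unfolding e_def by (simp add: comp_def)
  define a where "a = gg 1 (e (X 1 \<omega>))"
  have e1: "gg 1 (Xvec X 1 \<omega>) = a" unfolding a_def e_def Xvec1 ..
  have e2: "gg 0 (Xvec X 0 \<omega>) = (\<integral>z. gg 1 (e z) \<partial>PX)" unfolding gg_0 e_def ..
  have si: "integrable PX (\<lambda>z. gg 1 (e z))" unfolding e_def by (rule g1_PX)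
  have ic: "integrable PX (\<lambda>_. a)" using pPX by (simp add: prob_space.finite_measure finite_measure.integrable_const)
  have diff: "a - (\<integral>z. gg 1 (e z) \<partial>PX) = (\<integral>z. (a - gg 1 (e z)) \<partial>PX)"
    using ic si prob_space.prob_space[OF pPX] by (simp add: measure_def prob_space.emeasure_space_1[OF pPX])
  have hm: "(\<lambda>z. a - gg 1 (e z)) \<in> borel_measurable PX" using gm by simp
  have Dm: "(\<lambda>z. dist (X 1 \<omega>) z) \<in> borel_measurable PX" by simp
  have "ennreal (N (gg 1 (Xvec X 1 \<omega>) - gg 0 (Xvec X 0 \<omega>))) = ennreal (N (\<integral>z. (a - gg 1 (e z)) \<partial>PX))"
    unfolding e1 e2 diff ..
  also have "\<dots> \<le> (\<integral>\<^sup>+z. ennreal (N (a - gg 1 (e z))) \<partial>PX)"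
    using hm by (rule N_jensen_X1)
  also have "\<dots> \<le> (\<integral>\<^sup>+z. ennreal (Kc \<rho> 1 n) * ennreal (dist (X 1 \<omega>) z) \<partial>PX)"
  proof (rule nn_integral_mono)
    fix z
    have "N (a - gg 1 (e z)) \<le> (\<Sum>i\<in>{1..<1}. dist (e (X 1 \<omega>) i) (e z i)) + Kc \<rho> 1 n * dist (e (X 1 \<omega>) 1) (e z 1)"
      unfolding a_def using conjunct2[OF lv1] esp by blast
    hence "N (a - gg 1 (e z)) \<le> Kc \<rho> 1 n * dist (X 1 \<omega>) z" by (simp add: e_def)
    hence "ennreal (N (a - gg 1 (e z))) \<le> ennreal (Kc \<rho> 1 n * dist (X 1 \<omega>) z)" by (rule ennreal_leI)
    also have "\<dots> = ennreal (Kc \<rho> 1 n) * ennreal (dist (X 1 \<omega>) z)"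
      by (rule ennreal_mult) (use Kc_nn[of 1] in auto)
    finally show "ennreal (N (a - gg 1 (e z))) \<le> ennreal (Kc \<rho> 1 n) * ennreal (dist (X 1 \<omega>) z)" .
  qed
  also have "\<dots> = ennreal (Kc \<rho> 1 n) * (\<integral>\<^sup>+z. ennreal (dist (X 1 \<omega>) z) \<partial>PX)"
    by (rule nn_integral_cmult) (use Dm in simp)
  finally show ?thesis .
qed

lemma H_bound:
  assumes C2: "\<forall>m\<ge>2. 0 \<le> \<tau> m \<and> 0 \<le> \<xi> m \<and> (\<forall>x y y'. dist (F m x y) (F m x y') \<le> \<tau> m * dist y y' + \<xi> m)"
    and k: "2 \<le> k"
  shows "(\<integral>\<^sup>+y'. ennreal (dist (F k x y) (F k x y')) \<partial>Pe)
     \<le> ennreal (\<tau> k) * (\<integral>\<^sup>+y'. ennreal (dist y y') \<partial>Pe) + ennreal (\<xi> k)"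
proof -
  have t: "0 \<le> \<tau> k" "0 \<le> \<xi> k" "\<And>y'. dist (F k x y) (F k x y') \<le> \<tau> k * dist y y' + \<xi> k"
    using C2 k by auto
  have dm: "(\<lambda>y'. ennreal (\<tau> k) * ennreal (dist y y')) \<in> borel_measurable Pe" by simp
  have "(\<integral>\<^sup>+y'. ennreal (dist (F k x y) (F k x y')) \<partial>Pe)
      \<le> (\<integral>\<^sup>+y'. (ennreal (\<tau> k) * ennreal (dist y y') + ennreal (\<xi> k)) \<partial>Pe)"
  proof (rule nn_integral_mono)
    fix y'
    have "ennreal (dist (F k x y) (F k x y')) \<le> ennreal (\<tau> k * dist y y' + \<xi> k)"
      by (rule ennreal_leI) (rule t(3))
    also have "\<dots> = ennreal (\<tau> k * dist y y') + ennreal (\<xi> k)"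
      by (rule ennreal_plus) (use t in auto)
    also have "ennreal (\<tau> k * dist y y') = ennreal (\<tau> k) * ennreal (dist y y')"
      by (rule ennreal_mult) (use t in auto)
    finally show "ennreal (dist (F k x y) (F k x y')) \<le> ennreal (\<tau> k) * ennreal (dist y y') + ennreal (\<xi> k)" .
  qed
  also have "\<dots> = (\<integral>\<^sup>+y'. ennreal (\<tau> k) * ennreal (dist y y') \<partial>Pe) + (\<integral>\<^sup>+y'. ennreal (\<xi> k) \<partial>Pe)"
    by (rule nn_integral_add[OF dm]) simp
  also have "(\<integral>\<^sup>+y'. ennreal (\<xi> k) \<partial>Pe) = ennreal (\<xi> k)"
    using prob_space.emeasure_space_1[OF pPe] by (simp add: nn_integral_const)
  also have "(\<integral>\<^sup>+y'. ennreal (\<tau> k) * ennreal (dist y y') \<partial>Pe) = ennreal (\<tau> k) * (\<integral>\<^sup>+y'. ennreal (dist y y') \<partial>Pe)"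
    by (rule nn_integral_cmult) simp
  finally show ?thesis .
qed

end

lemma item4:
  assumes rho: "\<And>m. m \<ge> 2 \<Longrightarrow> 0 \<le> \<rho> m" and tx: "\<forall>m\<ge>2. 0 \<le> \<tau> m \<and> 0 \<le> \<xi> m"
    and h: "0 \<le> \<alpha> \<and> \<alpha> < 1 \<and> 0 < r \<and> r < 1 \<and> 0 < \<eta> \<and>
           (\<forall>m\<ge>2. \<rho> m \<le> 1 - r / real m powr \<alpha> \<and> max (\<xi> m) (\<tau> m) \<le> \<eta> / real m powr \<alpha>)"
  shows "(\<exists>B. \<forall>m\<ge>2. Kc \<rho> 1 m \<le> B) \<and> (\<exists>B. \<forall>m\<ge>2. \<forall>k\<in>{2..m}. Kc \<rho> k m * (\<tau> k + \<xi> k) \<le> B)"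
proof -
  obtain C where C: "\<And>k n. k \<ge> 1 \<Longrightarrow> Kc \<rho> k n \<le> C * real k powr \<alpha>"
    using Kc_poly[of \<rho> r \<alpha>] rho h by blast
  have A: "\<forall>m\<ge>2. Kc \<rho> 1 m \<le> C" using C[of 1] by simp
  have B: "Kc \<rho> k m * (\<tau> k + \<xi> k) \<le> 2 * \<eta> * C" if "m \<ge> 2" "k \<in> {2..m}" for m k
  proof -
    have k2: "k \<ge> 2" using that by simp
    have kp: "real k powr \<alpha> > 0" using k2 by simp
    have K0: "0 \<le> Kc \<rho> k m" using rho k2 by (intro Kc_nonneg) auto
    have "max (\<xi> k) (\<tau> k) \<le> \<eta> / real k powr \<alpha>" using h k2 by blast
    hence "\<tau> k + \<xi> k \<le> \<eta> / real k powr \<alpha> + \<eta> / real k powr \<alpha>" by (intro add_mono) auto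
    hence ts: "\<tau> k + \<xi> k \<le> 2 * \<eta> / real k powr \<alpha>" by simp
    have "Kc \<rho> k m * (\<tau> k + \<xi> k) \<le> Kc \<rho> k m * (2 * \<eta> / real k powr \<alpha>)"
      using ts K0 by (rule mult_left_mono)
    also have "\<dots> \<le> (C * real k powr \<alpha>) * (2 * \<eta> / real k powr \<alpha>)"
      using C[of k m] k2 h kp by (intro mult_right_mono) auto
    also have "\<dots> = 2 * \<eta> * C" using kp by (simp add: field_simps)
    finally show ?thesis .
  qed
  show ?thesis using A B by blast
qed

lemma item5:
  assumes rho: "\<And>m. m \<ge> 2 \<Longrightarrow> 0 \<le> \<rho> m" and tx: "\<forall>m\<ge>2. 0 \<le> \<tau> m \<and> 0 \<le> \<xi> m"
    and h: "0 < \<alpha> \<and> \<alpha> < 1 \<and> 0 < r \<and> r < 1 \<and> 0 < \<eta> \<and>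
           (\<forall>m\<ge>2. \<rho> m \<le> 1 - r / real m powr \<alpha> \<and> max (\<xi> m) (\<tau> m) \<le> \<eta>)"
  shows "(\<exists>B. \<forall>m\<ge>2. Kc \<rho> 1 m \<le> B) \<and>
            (\<exists>C. \<forall>m\<ge>2. \<forall>k\<in>{2..m}. Kc \<rho> k m * (\<tau> k + \<xi> k) \<le> C * real k powr \<alpha>)"
proof -
  obtain C where C: "\<And>k n. k \<ge> 1 \<Longrightarrow> Kc \<rho> k n \<le> C * real k powr \<alpha>"
    using Kc_poly[of \<rho> r \<alpha>] rho h by (meson less_imp_le)
  have A: "\<forall>m\<ge>2. Kc \<rho> 1 m \<le> C" using C[of 1] by simp
  have B: "Kc \<rho> k m * (\<tau> k + \<xi> k) \<le> (2 * \<eta> * C) * real k powr \<alpha>" if "m \<ge> 2" "k \<in> {2..m}" for m k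
  proof -
    have k2: "k \<ge> 2" using that by simp
    have K0: "0 \<le> Kc \<rho> k m" using rho k2 by (intro Kc_nonneg) auto
    have "max (\<xi> k) (\<tau> k) \<le> \<eta>" using h k2 by blast
    hence ts: "\<tau> k + \<xi> k \<le> 2 * \<eta>" by simp
    have "Kc \<rho> k m * (\<tau> k + \<xi> k) \<le> Kc \<rho> k m * (2 * \<eta>)"
      using ts K0 by (rule mult_left_mono)
    also have "\<dots> \<le> (C * real k powr \<alpha>) * (2 * \<eta>)"
      using C[of k m] k2 h by (intro mult_right_mono) auto
    also have "\<dots> = (2 * \<eta> * C) * real k powr \<alpha>" by (simp add: field_simps)
    finally show ?thesis .
  qed
  show ?thesis using A B by blast
qed

lemma item6:
  assumes rho: "\<And>m. m \<ge> 2 \<Longrightarrow> 0 \<le> \<rho> m"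
    and h: "0 < \<alpha> \<and> \<alpha> \<le> 1 \<and> 0 < r \<and> r < 1 \<and> 0 < \<eta> \<and>
           (\<forall>m\<ge>2. \<rho> m \<le> r \<and> max (\<xi> m) (\<tau> m) \<le> \<eta> / real m powr \<alpha>)"
  shows "(\<exists>B. \<forall>m\<ge>2. Kc \<rho> 1 m \<le> B) \<and>
            (\<exists>C. \<forall>m\<ge>2. \<forall>k\<in>{2..m}. Kc \<rho> k m * \<tau> k \<le> C * real k powr (- \<alpha>))"
proof -
  have rr: "\<And>i. i \<ge> 2 \<Longrightarrow> 0 \<le> \<rho> i \<and> \<rho> i \<le> r" using rho h by blast
  have Kg: "\<And>k n. k \<ge> 1 \<Longrightarrow> Kc \<rho> k n \<le> 1 / (1 - r)"
    by (intro Kc_geom[where r=r]) (use rr h in auto)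
  have A: "\<forall>m\<ge>2. Kc \<rho> 1 m \<le> 1 / (1 - r)" using Kg[of 1] by simp
  have B: "Kc \<rho> k m * \<tau> k \<le> (\<eta> / (1 - r)) * real k powr (- \<alpha>)" if "m \<ge> 2" "k \<in> {2..m}" for m k
  proof -
    have k2: "k \<ge> 2" using that by simp
    have K0: "0 \<le> Kc \<rho> k m" using rho k2 by (intro Kc_nonneg) auto
    have "max (\<xi> k) (\<tau> k) \<le> \<eta> / real k powr \<alpha>" using h k2 by blast
    hence ts: "\<tau> k \<le> \<eta> * real k powr (- \<alpha>)" using k2 by (simp add: powr_minus divide_inverse)
    have e0: "0 \<le> \<eta> * real k powr (- \<alpha>)" using h by simp
    have "Kc \<rho> k m * \<tau> k \<le> Kc \<rho> k m * (\<eta> * real k powr (- \<alpha>))"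
      using ts K0 by (rule mult_left_mono)
    also have "\<dots> \<le> (1 / (1 - r)) * (\<eta> * real k powr (- \<alpha>))"
      using Kg[of k m] k2 e0 by (intro mult_right_mono) auto
    also have "\<dots> = (\<eta> / (1 - r)) * real k powr (- \<alpha>)" by simp
    finally show ?thesis .
  qed
  show ?thesis using A B by blast
qed

theorem lemma2p1:
  fixes M :: "'a measure"
    and X :: "nat \<Rightarrow> 'a \<Rightarrow> 'x::polish_space"
    and \<epsilon> :: "nat \<Rightarrow> 'a \<Rightarrow> 'y::polish_space"
    and F :: "nat \<Rightarrow> 'x \<Rightarrow> 'y \<Rightarrow> 'x"
    and N :: "real^'d \<Rightarrow> real"
    and f :: "(nat \<Rightarrow> 'x) \<Rightarrow> real^'d"
    and n :: nat
    and \<rho> \<tau> \<xi> :: "nat \<Rightarrow> real"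
  assumes M: "prob_space M"
    and eps_meas: "\<And>i. \<epsilon> i \<in> borel_measurable M"
    and eps_indep: "prob_space.indep_vars M (\<lambda>_. borel) \<epsilon> {1..}"
    and eps_ident: "\<And>i. i \<ge> 1 \<Longrightarrow> distr M borel (\<epsilon> i) = distr M borel (\<epsilon> 1)"
    and X1_meas: "X 1 \<in> borel_measurable M"
    and X1_indep: "prob_space.indep_set M
        (sets (vimage_algebra (space M) (X 1) borel))
        (sets (vimage_algebra (space M) (\<lambda>\<omega>. \<lambda>i\<in>{2..}. \<epsilon> i \<omega>) (PiM {2..} (\<lambda>_. borel))))"
    and F_meas: "\<And>m. m \<ge> 2 \<Longrightarrow> (\<lambda>(x, y). F m x y) \<in> borel_measurable (borel \<Otimes>\<^sub>M borel)"
    and X_rec: "\<And>m \<omega>. m \<ge> 2 \<Longrightarrow> X m \<omega> = F m (X (m - 1) \<omega>) (\<epsilon> m \<omega>)"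
    and N_norm: "is_norm N"
    and N_jensen_X1: "\<And>h. h \<in> borel_measurable (distr M borel (X 1)) \<Longrightarrow>
        ennreal (N (\<integral>x. h x \<partial>distr M borel (X 1))) \<le> (\<integral>\<^sup>+x. ennreal (N (h x)) \<partial>distr M borel (X 1))"
    and N_jensen_eps: "\<And>h. h \<in> borel_measurable (distr M borel (\<epsilon> 1)) \<Longrightarrow>
        ennreal (N (\<integral>y. h y \<partial>distr M borel (\<epsilon> 1))) \<le> (\<integral>\<^sup>+y. ennreal (N (h y)) \<partial>distr M borel (\<epsilon> 1))"
    and n2: "n \<ge> 2"
    and f_meas: "f \<in> borel_measurable (PiM {1..n} (\<lambda>_. borel))"
    and f_lip: "\<And>x x'. x \<in> space (PiM {1..n} (\<lambda>_. (borel :: 'x measure))) \<Longrightarrow>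
        x' \<in> space (PiM {1..n} (\<lambda>_. (borel :: 'x measure))) \<Longrightarrow>
        N (f x - f x') \<le> (\<Sum>i=1..n. dist (x i) (x' i))"
    and f_int: "integrable M (\<lambda>\<omega>. f (Xvec X n \<omega>))"
    and C1: "\<And>m. m \<ge> 2 \<Longrightarrow> 0 \<le> \<rho> m \<and> \<rho> m < 1 \<and>
        (\<forall>x x'. (\<integral>\<^sup>+\<omega>. ennreal (dist (F m x (\<epsilon> 1 \<omega>)) (F m x' (\<epsilon> 1 \<omega>))) \<partial>M)
                  \<le> ennreal (\<rho> m * dist x x'))"
  shows "\<exists>g :: nat \<Rightarrow> (nat \<Rightarrow> 'x) \<Rightarrow> real^'d.
    let G\<^sub>X = (\<lambda>x. \<integral>\<^sup>+x'. ennreal (dist x x') \<partial>distr M borel (X 1));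
        G\<^sub>\<epsilon> = (\<lambda>y. \<integral>\<^sup>+y'. ennreal (dist y y') \<partial>distr M borel (\<epsilon> 1));
        H = (\<lambda>k x y. \<integral>\<^sup>+y'. ennreal (dist (F k x y) (F k x y')) \<partial>distr M borel (\<epsilon> 1));
        Mart = (\<lambda>k \<omega>. g k (Xvec X k \<omega>) - g (k - 1) (Xvec X (k - 1) \<omega>))
    in
    \<comment> \<open>g_k(X_1,...,X_k) is a version of E[f(X_1,...,X_n) | F_k], 0 <= k <= n\<close>
    (\<forall>k\<in>{0..n}. g k \<in> borel_measurable (PiM {1..k} (\<lambda>_. borel)) \<and>
        is_cond_exp_version M (Filt M X k) (\<lambda>\<omega>. f (Xvec X n \<omega>)) (\<lambda>\<omega>. g k (Xvec X k \<omega>))) \<and>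
    \<comment> \<open>item 1\<close>
    (\<forall>k\<in>{1..n}. \<forall>x\<in>space (PiM {1..k} (\<lambda>_. borel)). \<forall>x'\<in>space (PiM {1..k} (\<lambda>_. borel)).
        N (g k x - g k x') \<le> (\<Sum>i\<in>{1..<k}. dist (x i) (x' i)) + Kc \<rho> k n * dist (x k) (x' k)) \<and>
    \<comment> \<open>item 2\<close>
    (\<forall>\<omega>\<in>space M. ennreal (N (Mart 1 \<omega>)) \<le> ennreal (Kc \<rho> 1 n) * G\<^sub>X (X 1 \<omega>)) \<and>
    (\<forall>k\<in>{2..n}. \<forall>\<omega>\<in>space M.
        ennreal (N (Mart k \<omega>)) \<le> ennreal (Kc \<rho> k n) * H k (X (k - 1) \<omega>) (\<epsilon> k \<omega>)) \<and>
    \<comment> \<open>items 3 to 6, under (C2)\<close>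
    ((\<forall>m\<ge>2. 0 \<le> \<tau> m \<and> 0 \<le> \<xi> m \<and> (\<forall>x y y'. dist (F m x y) (F m x y') \<le> \<tau> m * dist y y' + \<xi> m))
     \<longrightarrow>
       (\<forall>k\<in>{2..n}. \<forall>x y. H k x y \<le> ennreal (\<tau> k) * G\<^sub>\<epsilon> y + ennreal (\<xi> k)) \<and>
       (\<forall>k\<in>{2..n}. \<forall>\<omega>\<in>space M.
          ennreal (N (Mart k \<omega>)) \<le> ennreal (Kc \<rho> k n) * (ennreal (\<tau> k) * G\<^sub>\<epsilon> (\<epsilon> k \<omega>) + ennreal (\<xi> k))) \<and>
       \<comment> \<open>item 4: condition (A)\<close>
       ((\<exists>\<alpha> r \<eta>. 0 \<le> \<alpha> \<and> \<alpha> < 1 \<and> 0 < r \<and> r < 1 \<and> 0 < \<eta> \<and>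
           (\<forall>m\<ge>2. \<rho> m \<le> 1 - r / real m powr \<alpha> \<and> max (\<xi> m) (\<tau> m) \<le> \<eta> / real m powr \<alpha>))
        \<longrightarrow> (\<exists>B. \<forall>m\<ge>2. Kc \<rho> 1 m \<le> B) \<and>
            (\<exists>B. \<forall>m\<ge>2. \<forall>k\<in>{2..m}. Kc \<rho> k m * (\<tau> k + \<xi> k) \<le> B)) \<and>
       \<comment> \<open>item 5: condition (B)\<close>
       (\<forall>\<alpha> r \<eta>. (0 < \<alpha> \<and> \<alpha> < 1 \<and> 0 < r \<and> r < 1 \<and> 0 < \<eta> \<and>
           (\<forall>m\<ge>2. \<rho> m \<le> 1 - r / real m powr \<alpha> \<and> max (\<xi> m) (\<tau> m) \<le> \<eta>))
        \<longrightarrow> (\<exists>B. \<forall>m\<ge>2. Kc \<rho> 1 m \<le> B) \<and>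
            (\<exists>C. \<forall>m\<ge>2. \<forall>k\<in>{2..m}. Kc \<rho> k m * (\<tau> k + \<xi> k) \<le> C * real k powr \<alpha>)) \<and>
       \<comment> \<open>item 6: condition (C)\<close>
       (\<forall>\<alpha> r \<eta>. (0 < \<alpha> \<and> \<alpha> \<le> 1 \<and> 0 < r \<and> r < 1 \<and> 0 < \<eta> \<and>
           (\<forall>m\<ge>2. \<rho> m \<le> r \<and> max (\<xi> m) (\<tau> m) \<le> \<eta> / real m powr \<alpha>))
        \<longrightarrow> (\<exists>B. \<forall>m\<ge>2. Kc \<rho> 1 m \<le> B) \<and>
            (\<exists>C. \<forall>m\<ge>2. \<forall>k\<in>{2..m}. Kc \<rho> k m * \<tau> k \<le> C * real k powr (- \<alpha>))))"
proof -
  interpret L M X \<epsilon> F N f n \<rho>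
    by (rule L.intro[OF M], unfold_locales) (fact+)
  have P0: "\<forall>k\<in>{0..n}. gg k \<in> borel_measurable (PiM {1..k} (\<lambda>_. borel)) \<and>
        is_cond_exp_version M (Filt M X k) (\<lambda>\<omega>. f (Xvec X n \<omega>)) (\<lambda>\<omega>. gg k (Xvec X k \<omega>))"
  proof
    fix k assume k: "k \<in> {0..n}"
    show "gg k \<in> borel_measurable (PiM {1..k} (\<lambda>_. borel)) \<and>
        is_cond_exp_version M (Filt M X k) (\<lambda>\<omega>. f (Xvec X n \<omega>)) (\<lambda>\<omega>. gg k (Xvec X k \<omega>))"
    proof (cases "k = 0")
      case True
      have "gg 0 \<in> borel_measurable (PiM {1..0} (\<lambda>_. borel))" unfolding gg_0 by simp
      thus ?thesis using cond_exp_0 True by simp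
    next
      case False
      hence k1: "1 \<le> k" "k \<le> n" using k by auto
      show ?thesis using levels[OF k1] cond_exp_pos[OF k1] by blast
    qed
  qed
  have P1: "\<forall>k\<in>{1..n}. \<forall>x\<in>space (PiM {1..k} (\<lambda>_. borel)). \<forall>x'\<in>space (PiM {1..k} (\<lambda>_. borel)).
        N (gg k x - gg k x') \<le> (\<Sum>i\<in>{1..<k}. dist (x i) (x' i)) + Kc \<rho> k n * dist (x k) (x' k)"
  proof
    fix k assume "k \<in> {1..n}"
    hence k1: "1 \<le> k" "k \<le> n" by auto
    show "\<forall>x\<in>space (PiM {1..k} (\<lambda>_. borel)). \<forall>x'\<in>space (PiM {1..k} (\<lambda>_. borel)).
        N (gg k x - gg k x') \<le> (\<Sum>i\<in>{1..<k}. dist (x i) (x' i)) + Kc \<rho> k n * dist (x k) (x' k)"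
      using levels[OF k1] by blast
  qed
  have P2: "\<forall>\<omega>\<in>space M. ennreal (N (gg 1 (Xvec X 1 \<omega>) - gg (1 - 1) (Xvec X (1 - 1) \<omega>)))
      \<le> ennreal (Kc \<rho> 1 n) * (\<integral>\<^sup>+x'. ennreal (dist (X 1 \<omega>) x') \<partial>distr M borel (X 1))"
    using mart_1 by simp
  have P3: "\<forall>k\<in>{2..n}. \<forall>\<omega>\<in>space M.
        ennreal (N (gg k (Xvec X k \<omega>) - gg (k - 1) (Xvec X (k - 1) \<omega>)))
        \<le> ennreal (Kc \<rho> k n) * (\<integral>\<^sup>+y'. ennreal (dist (F k (X (k - 1) \<omega>) (\<epsilon> k \<omega>)) (F k (X (k - 1) \<omega>) y')) \<partial>distr M borel (\<epsilon> 1))"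
    using mart_k by simp
  have P4: "(\<forall>m\<ge>2. 0 \<le> \<tau> m \<and> 0 \<le> \<xi> m \<and> (\<forall>x y y'. dist (F m x y) (F m x y') \<le> \<tau> m * dist y y' + \<xi> m))
     \<longrightarrow>
       (\<forall>k\<in>{2..n}. \<forall>x y. (\<integral>\<^sup>+y'. ennreal (dist (F k x y) (F k x y')) \<partial>distr M borel (\<epsilon> 1))
           \<le> ennreal (\<tau> k) * (\<integral>\<^sup>+y'. ennreal (dist y y') \<partial>distr M borel (\<epsilon> 1)) + ennreal (\<xi> k)) \<and>
       (\<forall>k\<in>{2..n}. \<forall>\<omega>\<in>space M.
          ennreal (N (gg k (Xvec X k \<omega>) - gg (k - 1) (Xvec X (k - 1) \<omega>)))
          \<le> ennreal (Kc \<rho> k n) * (ennreal (\<tau> k) * (\<integral>\<^sup>+y'. ennreal (dist (\<epsilon> k \<omega>) y') \<partial>distr M borel (\<epsilon> 1)) + ennreal (\<xi> k))) \<and>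
       ((\<exists>\<alpha> r \<eta>. 0 \<le> \<alpha> \<and> \<alpha> < 1 \<and> 0 < r \<and> r < 1 \<and> 0 < \<eta> \<and>
           (\<forall>m\<ge>2. \<rho> m \<le> 1 - r / real m powr \<alpha> \<and> max (\<xi> m) (\<tau> m) \<le> \<eta> / real m powr \<alpha>))
        \<longrightarrow> (\<exists>B. \<forall>m\<ge>2. Kc \<rho> 1 m \<le> B) \<and>
            (\<exists>B. \<forall>m\<ge>2. \<forall>k\<in>{2..m}. Kc \<rho> k m * (\<tau> k + \<xi> k) \<le> B)) \<and>
       (\<forall>\<alpha> r \<eta>. (0 < \<alpha> \<and> \<alpha> < 1 \<and> 0 < r \<and> r < 1 \<and> 0 < \<eta> \<and>
           (\<forall>m\<ge>2. \<rho> m \<le> 1 - r / real m powr \<alpha> \<and> max (\<xi> m) (\<tau> m) \<le> \<eta>))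
        \<longrightarrow> (\<exists>B. \<forall>m\<ge>2. Kc \<rho> 1 m \<le> B) \<and>
            (\<exists>C. \<forall>m\<ge>2. \<forall>k\<in>{2..m}. Kc \<rho> k m * (\<tau> k + \<xi> k) \<le> C * real k powr \<alpha>)) \<and>
       (\<forall>\<alpha> r \<eta>. (0 < \<alpha> \<and> \<alpha> \<le> 1 \<and> 0 < r \<and> r < 1 \<and> 0 < \<eta> \<and>
           (\<forall>m\<ge>2. \<rho> m \<le> r \<and> max (\<xi> m) (\<tau> m) \<le> \<eta> / real m powr \<alpha>))
        \<longrightarrow> (\<exists>B. \<forall>m\<ge>2. Kc \<rho> 1 m \<le> B) \<and>
            (\<exists>C. \<forall>m\<ge>2. \<forall>k\<in>{2..m}. Kc \<rho> k m * \<tau> k \<le> C * real k powr (- \<alpha>)))"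
  proof (rule impI)
    assume C2: "\<forall>m\<ge>2. 0 \<le> \<tau> m \<and> 0 \<le> \<xi> m \<and> (\<forall>x y y'. dist (F m x y) (F m x y') \<le> \<tau> m * dist y y' + \<xi> m)"
    have tx: "\<forall>m\<ge>2. 0 \<le> \<tau> m \<and> 0 \<le> \<xi> m" using C2 by blast
    have rho: "\<And>m. m \<ge> 2 \<Longrightarrow> 0 \<le> \<rho> m" by (rule rho_nn)
    have H: "\<forall>k\<in>{2..n}. \<forall>x y. (\<integral>\<^sup>+y'. ennreal (dist (F k x y) (F k x y')) \<partial>distr M borel (\<epsilon> 1))
           \<le> ennreal (\<tau> k) * (\<integral>\<^sup>+y'. ennreal (dist y y') \<partial>distr M borel (\<epsilon> 1)) + ennreal (\<xi> k)"
      using H_bound[OF C2] by simp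
    have MH: "\<forall>k\<in>{2..n}. \<forall>\<omega>\<in>space M.
          ennreal (N (gg k (Xvec X k \<omega>) - gg (k - 1) (Xvec X (k - 1) \<omega>)))
          \<le> ennreal (Kc \<rho> k n) * (ennreal (\<tau> k) * (\<integral>\<^sup>+y'. ennreal (dist (\<epsilon> k \<omega>) y') \<partial>distr M borel (\<epsilon> 1)) + ennreal (\<xi> k))"
    proof (intro ballI)
      fix k \<omega> assume k: "k \<in> {2..n}" and \<omega>: "\<omega> \<in> space M"
      have "ennreal (N (gg k (Xvec X k \<omega>) - gg (k - 1) (Xvec X (k - 1) \<omega>)))
        \<le> ennreal (Kc \<rho> k n) * (\<integral>\<^sup>+y'. ennreal (dist (F k (X (k - 1) \<omega>) (\<epsilon> k \<omega>)) (F k (X (k - 1) \<omega>) y')) \<partial>distr M borel (\<epsilon> 1))"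
        using P3 k \<omega> by blast
      also have "\<dots> \<le> ennreal (Kc \<rho> k n) * (ennreal (\<tau> k) * (\<integral>\<^sup>+y'. ennreal (dist (\<epsilon> k \<omega>) y') \<partial>distr M borel (\<epsilon> 1)) + ennreal (\<xi> k))"
        using H k by (intro mult_left_mono) auto
      finally show "ennreal (N (gg k (Xvec X k \<omega>) - gg (k - 1) (Xvec X (k - 1) \<omega>)))
          \<le> ennreal (Kc \<rho> k n) * (ennreal (\<tau> k) * (\<integral>\<^sup>+y'. ennreal (dist (\<epsilon> k \<omega>) y') \<partial>distr M borel (\<epsilon> 1)) + ennreal (\<xi> k))" .
    qed
    have I4: "(\<exists>\<alpha> r \<eta>. 0 \<le> \<alpha> \<and> \<alpha> < 1 \<and> 0 < r \<and> r < 1 \<and> 0 < \<eta> \<and>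
           (\<forall>m\<ge>2. \<rho> m \<le> 1 - r / real m powr \<alpha> \<and> max (\<xi> m) (\<tau> m) \<le> \<eta> / real m powr \<alpha>))
        \<longrightarrow> (\<exists>B. \<forall>m\<ge>2. Kc \<rho> 1 m \<le> B) \<and>
            (\<exists>B. \<forall>m\<ge>2. \<forall>k\<in>{2..m}. Kc \<rho> k m * (\<tau> k + \<xi> k) \<le> B)"
    proof
      assume "\<exists>\<alpha> r \<eta>. 0 \<le> \<alpha> \<and> \<alpha> < 1 \<and> 0 < r \<and> r < 1 \<and> 0 < \<eta> \<and>
           (\<forall>m\<ge>2. \<rho> m \<le> 1 - r / real m powr \<alpha> \<and> max (\<xi> m) (\<tau> m) \<le> \<eta> / real m powr \<alpha>)"
      then obtain \<alpha> r \<eta> where h: "0 \<le> \<alpha> \<and> \<alpha> < 1 \<and> 0 < r \<and> r < 1 \<and> 0 < \<eta> \<and>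
           (\<forall>m\<ge>2. \<rho> m \<le> 1 - r / real m powr \<alpha> \<and> max (\<xi> m) (\<tau> m) \<le> \<eta> / real m powr \<alpha>)" by blast
      show "(\<exists>B. \<forall>m\<ge>2. Kc \<rho> 1 m \<le> B) \<and> (\<exists>B. \<forall>m\<ge>2. \<forall>k\<in>{2..m}. Kc \<rho> k m * (\<tau> k + \<xi> k) \<le> B)"
        by (rule item4[OF _ tx h]) (rule rho)
    qed
    have I5: "\<forall>\<alpha> r \<eta>. (0 < \<alpha> \<and> \<alpha> < 1 \<and> 0 < r \<and> r < 1 \<and> 0 < \<eta> \<and>
           (\<forall>m\<ge>2. \<rho> m \<le> 1 - r / real m powr \<alpha> \<and> max (\<xi> m) (\<tau> m) \<le> \<eta>))
        \<longrightarrow> (\<exists>B. \<forall>m\<ge>2. Kc \<rho> 1 m \<le> B) \<and>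
            (\<exists>C. \<forall>m\<ge>2. \<forall>k\<in>{2..m}. Kc \<rho> k m * (\<tau> k + \<xi> k) \<le> C * real k powr \<alpha>)"
    proof (intro allI impI)
      fix \<alpha> r \<eta> assume h: "0 < \<alpha> \<and> \<alpha> < 1 \<and> 0 < r \<and> r < 1 \<and> 0 < \<eta> \<and>
           (\<forall>m\<ge>2. \<rho> m \<le> 1 - r / real m powr \<alpha> \<and> max (\<xi> m) (\<tau> m) \<le> \<eta>)"
      show "(\<exists>B. \<forall>m\<ge>2. Kc \<rho> 1 m \<le> B) \<and>
            (\<exists>C. \<forall>m\<ge>2. \<forall>k\<in>{2..m}. Kc \<rho> k m * (\<tau> k + \<xi> k) \<le> C * real k powr \<alpha>)"
        by (rule item5[OF _ tx h]) (rule rho)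
    qed
    have I6: "\<forall>\<alpha> r \<eta>. (0 < \<alpha> \<and> \<alpha> \<le> 1 \<and> 0 < r \<and> r < 1 \<and> 0 < \<eta> \<and>
           (\<forall>m\<ge>2. \<rho> m \<le> r \<and> max (\<xi> m) (\<tau> m) \<le> \<eta> / real m powr \<alpha>))
        \<longrightarrow> (\<exists>B. \<forall>m\<ge>2. Kc \<rho> 1 m \<le> B) \<and>
            (\<exists>C. \<forall>m\<ge>2. \<forall>k\<in>{2..m}. Kc \<rho> k m * \<tau> k \<le> C * real k powr (- \<alpha>))"
    proof (intro allI impI)
      fix \<alpha> r \<eta> assume h: "0 < \<alpha> \<and> \<alpha> \<le> 1 \<and> 0 < r \<and> r < 1 \<and> 0 < \<eta> \<and>
           (\<forall>m\<ge>2. \<rho> m \<le> r \<and> max (\<xi> m) (\<tau> m) \<le> \<eta> / real m powr \<alpha>)"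
      show "(\<exists>B. \<forall>m\<ge>2. Kc \<rho> 1 m \<le> B) \<and>
            (\<exists>C. \<forall>m\<ge>2. \<forall>k\<in>{2..m}. Kc \<rho> k m * \<tau> k \<le> C * real k powr (- \<alpha>))"
        by (rule item6[OF _ h]) (rule rho)
    qed
    show "(\<forall>k\<in>{2..n}. \<forall>x y. (\<integral>\<^sup>+y'. ennreal (dist (F k x y) (F k x y')) \<partial>distr M borel (\<epsilon> 1))
           \<le> ennreal (\<tau> k) * (\<integral>\<^sup>+y'. ennreal (dist y y') \<partial>distr M borel (\<epsilon> 1)) + ennreal (\<xi> k)) \<and>
       (\<forall>k\<in>{2..n}. \<forall>\<omega>\<in>space M.
          ennreal (N (gg k (Xvec X k \<omega>) - gg (k - 1) (Xvec X (k - 1) \<omega>)))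
          \<le> ennreal (Kc \<rho> k n) * (ennreal (\<tau> k) * (\<integral>\<^sup>+y'. ennreal (dist (\<epsilon> k \<omega>) y') \<partial>distr M borel (\<epsilon> 1)) + ennreal (\<xi> k))) \<and>
       ((\<exists>\<alpha> r \<eta>. 0 \<le> \<alpha> \<and> \<alpha> < 1 \<and> 0 < r \<and> r < 1 \<and> 0 < \<eta> \<and>
           (\<forall>m\<ge>2. \<rho> m \<le> 1 - r / real m powr \<alpha> \<and> max (\<xi> m) (\<tau> m) \<le> \<eta> / real m powr \<alpha>))
        \<longrightarrow> (\<exists>B. \<forall>m\<ge>2. Kc \<rho> 1 m \<le> B) \<and>
            (\<exists>B. \<forall>m\<ge>2. \<forall>k\<in>{2..m}. Kc \<rho> k m * (\<tau> k + \<xi> k) \<le> B)) \<and>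
       (\<forall>\<alpha> r \<eta>. (0 < \<alpha> \<and> \<alpha> < 1 \<and> 0 < r \<and> r < 1 \<and> 0 < \<eta> \<and>
           (\<forall>m\<ge>2. \<rho> m \<le> 1 - r / real m powr \<alpha> \<and> max (\<xi> m) (\<tau> m) \<le> \<eta>))
        \<longrightarrow> (\<exists>B. \<forall>m\<ge>2. Kc \<rho> 1 m \<le> B) \<and>
            (\<exists>C. \<forall>m\<ge>2. \<forall>k\<in>{2..m}. Kc \<rho> k m * (\<tau> k + \<xi> k) \<le> C * real k powr \<alpha>)) \<and>
       (\<forall>\<alpha> r \<eta>. (0 < \<alpha> \<and> \<alpha> \<le> 1 \<and> 0 < r \<and> r < 1 \<and> 0 < \<eta> \<and>
           (\<forall>m\<ge>2. \<rho> m \<le> r \<and> max (\<xi> m) (\<tau> m) \<le> \<eta> / real m powr \<alpha>))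
        \<longrightarrow> (\<exists>B. \<forall>m\<ge>2. Kc \<rho> 1 m \<le> B) \<and>
            (\<exists>C. \<forall>m\<ge>2. \<forall>k\<in>{2..m}. Kc \<rho> k m * \<tau> k \<le> C * real k powr (- \<alpha>)))"
      using H MH I4 I5 I6 by (intro conjI)
  qed
  show ?thesis
    unfolding Let_def
    apply (rule exI[of _ gg])
    apply (intro conjI)
        apply (rule P0)
       apply (rule P1)
      apply (rule P2)
     apply (rule P3)
    apply (rule P4)
    done
qed

end
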